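(* For all $x>0$ and $\nu>0$, \begin{align*} \left.\frac{\partial\,\mathrm{ber}_{\mu}(x)}{\partial\mu}\right|_{\mu=-\nu} &=-\mathrm{Re}\left[e^{-i\pi\nu/2}\left\{\left(e^{-i\pi\nu}+\cos\pi\nu\right)K_{\nu}\left(e^{i\pi/4}x\right)+\frac{2}{\pi}\sin\pi\nu\,\frac{\partial K_{\nu}}{\partial\nu}\left(e^{i\pi/4}x\right)\right\}+\frac{\partial J_{\nu}}{\partial\nu}\left(e^{-i\pi/4}x\right)\right],\\ \left.\frac{\partial\,\mathrm{bei}_{\mu}(x)}{\partial\mu}\right|_{\mu=-\nu} &=-\mathrm{Im}\left[e^{-i\pi\nu/2}\left\{\left(e^{-i\pi\nu}+\cos\pi\nu\right)K_{\nu}\left(e^{i\pi/4}x\right)+\frac{2}{\pi}\sin\pi\nu\,\frac{\partial K_{\nu}}{\partial\nu}\left(e^{i\pi/4}x\right)\right\}+\frac{\partial J_{\nu}}{\partial\nu}\left(e^{-i\pi/4}x\right)\right]. \end{align*}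
   Context: $J_\nu$ is the Bessel function of the first kind and $K_\nu$ the Macdonald function (modified Bessel function of the second kind), with principal branches. For real $\nu$ and $x\ge0$ the Kelvin functions are defined by $\mathrm{ber}_{\nu}(x)+i\,\mathrm{bei}_{\nu}(x)=e^{i\pi\nu}J_{\nu}(e^{-i\pi/4}x)$ and $\mathrm{ker}_{\nu}(x)+i\,\mathrm{kei}_{\nu}(x)=e^{-i\pi\nu/2}K_{\nu}(e^{i\pi/4}x)$, with all four functions real-valued. The notation $\frac{\partial J_{\nu}}{\partial\nu}(z)$ means $\frac{\partial}{\partial\mu}J_\mu(z)\big|_{\mu=\nu}$, similarly for $K_\nu$. (The paper writes the left-hand sides as $\partial\,\mathrm{ber}_{-\nu}(x)/\partial\nu$ and $\partial\,\mathrm{bei}_{-\nu}(x)/\partial\nu$, meaning the order derivative evaluated at order $-\nu$.) *)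

theory Defs
  imports "HOL-Analysis.Analysis"
begin

(* Bessel function of the first kind, principal branch, real order nu, complex argument:
   J_nu(z) = sum_k (-1)^k (z/2)^(2k+nu) / (k! Gamma(k+nu+1)),
   with (z/2)^nu = exp(nu Ln(z/2)) (principal) and 1/Gamma = rGamma (entire). *)
definition besselJ :: "real \<Rightarrow> complex \<Rightarrow> complex" where
  "besselJ \<nu> z = (\<Sum>k. (-1) ^ k * (z / 2) powr (of_real \<nu>) * (z / 2) ^ (2 * k)
                        * rGamma (of_real (real k + \<nu> + 1)) / of_nat (fact k))"

(* Macdonald function K_nu(z) for Re z > 0 (which covers every use below), via the
   standard integral representation K_nu(z) = int_0^infty exp(-z cosh t) cosh(nu t) dt. *)
definition besselK :: "real \<Rightarrow> complex \<Rightarrow> complex" where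
  "besselK \<nu> z = integral {0..} (\<lambda>t::real. exp (- z * of_real (cosh t)) * of_real (cosh (\<nu> * t)))"

definition besselJ_dorder :: "real \<Rightarrow> complex \<Rightarrow> complex" where
  "besselJ_dorder \<nu> z = vector_derivative (\<lambda>\<mu>. besselJ \<mu> z) (at \<nu>)"

definition besselK_dorder :: "real \<Rightarrow> complex \<Rightarrow> complex" where
  "besselK_dorder \<nu> z = vector_derivative (\<lambda>\<mu>. besselK \<mu> z) (at \<nu>)"

definition ber :: "real \<Rightarrow> real \<Rightarrow> real" where
  "ber \<nu> x = Re (exp (\<i> * of_real (pi * \<nu>)) * besselJ \<nu> (exp (- \<i> * of_real (pi / 4)) * of_real x))"

definition bei :: "real \<Rightarrow> real \<Rightarrow> real" where
  "bei \<nu> x = Im (exp (\<i> * of_real (pi * \<nu>)) * besselJ \<nu> (exp (- \<i> * of_real (pi / 4)) * of_real x))"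

end

theory Submission
  imports Defs "HOL-Complex_Analysis.Complex_Analysis" "HOL-Real_Asymp.Real_Asymp"
begin

lemma norm_pochhammer_ge1:
  fixes z :: complex
  assumes "Re z \<ge> 1"
  shows "norm (pochhammer z j) \<ge> 1"
proof -
  have "norm (pochhammer z j) = (\<Prod>i\<in>{0..<j}. norm (z + of_nat i))"
    by (simp add: pochhammer_prod prod_norm)
  also have "\<dots> \<ge> 1"
  proof (rule prod_ge_1)
    fix i assume "i \<in> {0..<j}"
    have "1 \<le> Re (z + of_nat i)" using assms by simp
    also have "\<dots> \<le> norm (z + of_nat i)" by (rule complex_Re_le_cmod)
    finally show "1 \<le> norm (z + of_nat i)" .
  qed
  finally show ?thesis .
qed

lemma rGamma_bound_compact:
  fixes K :: "complex set"
  assumes "compact K"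
  shows "\<exists>M. \<forall>m\<in>K. \<forall>k::nat. norm (rGamma (of_nat k + m + 1)) \<le> M"
proof -
  obtain B where B: "\<And>m. m \<in> K \<Longrightarrow> norm m \<le> B"
    using compact_imp_bounded[OF assms] bounded_iff by blast
  define N where "N = nat \<lceil>B\<rceil>"
  define K' where "K' = (\<Union>j\<in>{..N}. (\<lambda>m. of_nat j + m + 1) ` K)"
  have cK': "compact K'" unfolding K'_def
    by (intro compact_UN finite_atMost ballI compact_continuous_image continuous_intros assms)
  have "compact (rGamma ` K')"
    by (intro compact_continuous_image continuous_intros cK')
  then obtain M where M: "\<And>z. z \<in> K' \<Longrightarrow> norm (rGamma z) \<le> M"
    using compact_imp_bounded bounded_iff by (metis image_eqI)
  have "norm (rGamma (of_nat k + m + 1)) \<le> M" if m: "m \<in> K" for m k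
  proof (cases "k \<le> N")
    case True
    then show ?thesis using M m unfolding K'_def by auto
  next
    case False
    define z where "z = of_nat N + m + 1"
    have "- Re m \<le> norm m" using abs_Re_le_cmod[of m] by linarith
    then have "Re m \<ge> - B" using B[OF m] by linarith
    moreover have "real N \<ge> B" unfolding N_def by linarith
    ultimately have Rz: "Re z \<ge> 1" unfolding z_def by simp
    have "rGamma z = pochhammer z (k - N) * rGamma (z + of_nat (k - N))"
      by (rule pochhammer_rGamma)
    moreover have "z + of_nat (k - N) = of_nat k + m + 1"
      using False unfolding z_def by (simp add: of_nat_diff)
    ultimately have eq: "rGamma z = pochhammer z (k - N) * rGamma (of_nat k + m + 1)" by simp
    have "norm (rGamma (of_nat k + m + 1)) \<le> norm (pochhammer z (k - N)) * norm (rGamma (of_nat k + m + 1))"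
      using norm_pochhammer_ge1[OF Rz, of "k - N"] by (simp add: mult_le_cancel_right1)
    also have "\<dots> = norm (rGamma z)" by (simp add: eq norm_mult)
    also have "\<dots> \<le> M" using M m unfolding K'_def z_def by auto
    finally show ?thesis .
  qed
  then show ?thesis by blast
qed

lemma one_plus_of_nat_neq0 [simp]: "(1 + of_nat k :: complex) \<noteq> 0"
  by (metis of_nat_Suc of_nat_eq_0_iff add.commute nat.distinct(1))

lemma fact_plus_neq0 [simp]: "(fact k + fact k * of_nat k :: complex) \<noteq> 0"
proof -
  have "(fact k + fact k * of_nat k :: complex) = fact k * (1 + of_nat k)" by (simp add: algebra_simps)
  then show ?thesis by simp
qed

definition coefP :: "complex \<Rightarrow> nat \<Rightarrow> complex" where
  "coefP m k = rGamma (of_nat k + m + 1) / of_nat (fact k)"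

definition Pc :: "complex \<Rightarrow> complex \<Rightarrow> complex" where
  "Pc m y = (\<Sum>k. coefP m k * y ^ k)"

lemma coefP_bound:
  fixes K :: "complex set"
  assumes "compact K"
  shows "\<exists>M. \<forall>m\<in>K. \<forall>k y. norm (coefP m k * y ^ k) \<le> M * (norm y ^ k / fact k)"
proof -
  obtain M where M: "\<And>m k. m \<in> K \<Longrightarrow> norm (rGamma (of_nat k + m + 1)) \<le> M"
    using rGamma_bound_compact[OF assms] by blast
  have "norm (coefP m k * y ^ k) \<le> M * (norm y ^ k / fact k)" if "m \<in> K" for m k y
    using M[OF that, of k]
    by (simp add: coefP_def norm_mult norm_divide norm_power divide_simps mult_right_mono)
  then show ?thesis by blast
qed

lemma summable_norm_exp_ser: "summable (\<lambda>k. (r::real) ^ k / fact k)"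
  using summable_exp[of r] by (simp add: field_simps)

lemma summable_coefP: "summable (\<lambda>k. coefP m k * y ^ k)"
proof -
  obtain M where M: "\<And>k. norm (coefP m k * y ^ k) \<le> M * (norm y ^ k / fact k)"
    using coefP_bound[of "{m}"] by auto
  have "summable (\<lambda>k. M * (norm y ^ k / fact k))"
    by (intro summable_mult summable_norm_exp_ser)
  then show ?thesis
    by (rule summable_comparison_test'[where g = "\<lambda>k. M * (norm y ^ k / fact k)"]) (rule M)
qed

lemma diffs_coefP: "diffs (coefP m) = coefP (m + 1)"
proof
  fix k
  have "diffs (coefP m) k = of_nat (Suc k) * (rGamma (of_nat (Suc k) + m + 1) / of_nat (fact (Suc k)))"
    by (simp add: diffs_def coefP_def)
  also have "\<dots> = rGamma (of_nat k + (m + 1) + 1) / of_nat (fact k)"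
  proof -
    have f: "(of_nat (fact (Suc k)) :: complex) = of_nat (Suc k) * of_nat (fact k)"
      by (metis fact_Suc of_nat_fact)
    have nz: "(of_nat (Suc k) :: complex) \<noteq> 0" "(of_nat (fact k) :: complex) \<noteq> 0" "(1 + of_nat k :: complex) \<noteq> 0"
      by (simp_all only: of_nat_eq_0_iff fact_nonzero nat.distinct(1) not_False_eq_True)
         (metis of_nat_Suc of_nat_eq_0_iff add.commute nat.distinct(1))
    have e: "(of_nat (Suc k) + m + 1 :: complex) = of_nat k + (m + 1) + 1" by simp
    show ?thesis unfolding f e using nz by (simp add: field_simps)
  qed
  finally show "diffs (coefP m) k = coefP (m + 1) k" by (simp add: coefP_def)
qed

lemma Pc_deriv: "((Pc m) has_field_derivative Pc (m + 1) y) (at y)"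
proof -
  have "((\<lambda>y. \<Sum>k. coefP m k * y ^ k) has_field_derivative (\<Sum>k. diffs (coefP m) k * y ^ k)) (at y)"
    by (rule termdiffs_strong_converges_everywhere) (rule summable_coefP)
  then show ?thesis unfolding Pc_def[abs_def] diffs_coefP .
qed

lemma Pc_0: "Pc m 0 = rGamma (m + 1)"
  unfolding Pc_def by (subst suminf_finite[of "{0}"]) (auto simp: coefP_def)

lemma continuous_Pc: "continuous_on A (Pc m)"
  using Pc_deriv by (meson DERIV_continuous continuous_at_imp_continuous_on)

lemma Pc_rec: "Pc (m - 1) y = m * Pc m y + y * Pc (m + 1) y"
proof -
  have s1: "(\<lambda>k. coefP m k * y ^ k) sums Pc m y" unfolding Pc_def using summable_coefP by (simp add: summable_sums)
  have s2: "(\<lambda>k. coefP (m+1) k * y ^ k) sums Pc (m+1) y" unfolding Pc_def using summable_coefP by (simp add: summable_sums)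
  have s2': "(\<lambda>k. if k = 0 then 0 else coefP (m+1) (k - 1) * y ^ k) sums (y * Pc (m+1) y)"
  proof -
    have "(\<lambda>k. y * (coefP (m+1) k * y ^ k)) sums (y * Pc (m+1) y)" by (rule sums_mult[OF s2])
    then have "(\<lambda>k. coefP (m+1) k * y ^ Suc k) sums (y * Pc (m+1) y)" by (simp add: mult_ac)
    then have "(\<lambda>k. (\<lambda>k. if k = 0 then 0 else coefP (m+1) (k - 1) * y ^ k) (Suc k)) sums (y * Pc (m+1) y)"
      by simp
    then have "(\<lambda>k. if k = 0 then 0 else coefP (m+1) (k - 1) * y ^ k) sums (y * Pc (m+1) y + (\<lambda>k. if k = 0 then 0 else coefP (m+1) (k - 1) * y ^ k) 0)"
      by (rule sums_Suc_iff[where f = "\<lambda>k. if k = 0 then 0 else coefP (m+1) (k - 1) * y ^ k", THEN iffD1])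
    then show ?thesis by simp
  qed
  have "(\<lambda>k. m * (coefP m k * y ^ k) + (if k = 0 then 0 else coefP (m+1) (k - 1) * y ^ k)) sums (m * Pc m y + y * Pc (m + 1) y)"
    by (intro sums_add sums_mult s1 s2')
  moreover have "m * (coefP m k * y ^ k) + (if k = 0 then 0 else coefP (m+1) (k - 1) * y ^ k) = coefP (m - 1) k * y ^ k" for k
  proof (cases k)
    case 0
    then show ?thesis using rGamma_plus1[of m] by (simp add: coefP_def)
  next
    case (Suc j)
    define R where "R = rGamma (of_nat k + m + 1)"
    have a: "rGamma (of_nat k + m) = (of_nat k + m) * R"
      using rGamma_plus1[of "of_nat k + m"] by (simp add: R_def)
    have b: "coefP (m+1) (k - 1) = R / fact j"
      using Suc by (simp add: coefP_def R_def of_nat_fact add_ac)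
    have c: "(fact k :: complex) = of_nat k * fact j" using Suc by (simp add: fact_Suc)
    have nz: "(fact j :: complex) \<noteq> 0" "(of_nat k :: complex) \<noteq> 0" using Suc by simp_all
    have "m * (coefP m k * y ^ k) + (if k = 0 then 0 else coefP (m+1) (k - 1) * y ^ k)
        = (m * R / fact k + R / fact j) * y ^ k"
      using Suc by (simp add: b coefP_def R_def of_nat_fact field_simps)
    also have "m * R / fact k + R / fact j = rGamma (of_nat k + m) / fact k"
      unfolding a c using nz by (simp add: field_simps)
    finally show ?thesis by (simp add: coefP_def of_nat_fact)
  qed
  ultimately have "(\<lambda>k. coefP (m - 1) k * y ^ k) sums (m * Pc m y + y * Pc (m + 1) y)" by simp
  then show ?thesis unfolding Pc_def by (simp add: sums_iff)
qed

lemma besselJ_Pc: "besselJ \<nu> z = (z / 2) powr (of_real \<nu>) * Pc (of_real \<nu>) (- ((z / 2) ^ 2))"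
proof -
  have eq: "(-1) ^ k * (z / 2) powr (of_real \<nu>) * (z / 2) ^ (2 * k)
                        * rGamma (of_real (real k + \<nu> + 1)) / of_nat (fact k)
        = (z / 2) powr (of_real \<nu>) * (coefP (of_real \<nu>) k * (- ((z / 2) ^ 2)) ^ k)" for k
  proof -
    have h1: "(of_real (real k + \<nu> + 1) :: complex) = of_nat k + of_real \<nu> + 1" by simp
    have h2: "(- ((z / 2) ^ 2)) ^ k = (-1) ^ k * (z / 2) ^ (2 * k)"
      by (simp only: power_minus[of "(z/2)^2"] power_mult)
    show ?thesis unfolding coefP_def h1 h2 by (simp only: ac_simps times_divide_eq_left times_divide_eq_right)
  qed
  have "besselJ \<nu> z = (\<Sum>k. (z / 2) powr (of_real \<nu>) * (coefP (of_real \<nu>) k * (- ((z / 2) ^ 2)) ^ k))"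
    unfolding besselJ_def eq ..
  also have "\<dots> = (z / 2) powr (of_real \<nu>) * Pc (of_real \<nu>) (- ((z / 2) ^ 2))"
    unfolding Pc_def by (rule suminf_mult[OF summable_coefP])
  finally show ?thesis .
qed

lemma alg_minus: "(u::complex) \<noteq> 0 \<Longrightarrow> (U/u)*(n*P + u^2*Q) - n/(2*u)*(U*P) = n/2*(U/u)*P + U*(u*Q)"
  by (simp add: field_simps power2_eq_square)

lemma alg_plus: "(u::complex) \<noteq> 0 \<Longrightarrow> (U*u)*Q + n/(2*u)*(U*P) = n/2*(U/u)*P + U*(u*Q)"
  by (simp add: field_simps power2_eq_square)

definition Ifn :: "real \<Rightarrow> complex \<Rightarrow> complex" where
  "Ifn \<nu> w = (w / 2) powr (of_real \<nu>) * Pc (of_real \<nu>) ((w / 2) ^ 2)"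

lemma Ifn_deriv_raw:
  assumes "Re w > 0"
  shows "(Ifn \<nu> has_field_derivative
     (of_real \<nu> / 2 * (w/2) powr (of_real \<nu> - 1) * Pc (of_real \<nu>) ((w / 2) ^ 2)
      + (w/2) powr (of_real \<nu>) * ((w / 2) * Pc (of_real \<nu> + 1) ((w / 2) ^ 2)))) (at w)"
proof -
  have nr: "w / 2 \<notin> \<real>\<^sub>\<le>\<^sub>0" using assms by (auto simp: nonpos_Reals_def)
  have h2: "((\<lambda>w. w / 2) has_field_derivative 1/2) (at w)"
    by (auto intro!: derivative_eq_intros)
  have d1: "((\<lambda>w. (w / 2) powr (of_real \<nu>)) has_field_derivative
        (of_real \<nu> * (w/2) powr (of_real \<nu> - 1)) * (1/2)) (at w)"
    using DERIV_chain2[OF has_field_derivative_powr[OF nr, of "of_real \<nu>"] h2] .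
  have h3: "((\<lambda>w. (w / 2) ^ 2) has_field_derivative (w/2)) (at w)"
    by (auto intro!: derivative_eq_intros)
  have d2: "((\<lambda>w. Pc (of_real \<nu>) ((w / 2) ^ 2)) has_field_derivative
        Pc (of_real \<nu> + 1) ((w / 2) ^ 2) * (w/2)) (at w)"
    using DERIV_chain2[OF Pc_deriv h3] .
  show ?thesis unfolding Ifn_def[abs_def]
    by (rule DERIV_mult[OF d1 d2, THEN DERIV_cong]) (simp add: algebra_simps)
qed

lemma Ifn_deriv_minus:
  assumes "Re w > 0"
  shows "(Ifn \<nu> has_field_derivative (Ifn (\<nu> - 1) w - of_real \<nu> / w * Ifn \<nu> w)) (at w)"
proof -
  have w0: "w \<noteq> 0" using assms by auto
  define u where "u = w / 2"
  have u0: "u \<noteq> 0" using w0 by (simp add: u_def)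
  have p1: "u powr (of_real \<nu> - 1) = u powr (of_real \<nu>) / u"
    by (simp add: powr_diff u0)
  have "Ifn (\<nu> - 1) w - of_real \<nu> / w * Ifn \<nu> w
     = u powr (of_real \<nu> - 1) * (of_real \<nu> * Pc (of_real \<nu>) (u^2) + u^2 * Pc (of_real \<nu> + 1) (u^2))
       - of_real \<nu> / (2 * u) * (u powr (of_real \<nu>) * Pc (of_real \<nu>) (u ^ 2))"
    unfolding Ifn_def u_def[symmetric] using Pc_rec[of "of_real \<nu>" "u^2"]
    by (simp add: u_def)
  also have "\<dots> = of_real \<nu> / 2 * u powr (of_real \<nu> - 1) * Pc (of_real \<nu>) (u ^ 2)
      + u powr (of_real \<nu>) * (u * Pc (of_real \<nu> + 1) (u ^ 2))"
    unfolding p1 by (rule alg_minus[OF u0])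
  finally show ?thesis using Ifn_deriv_raw[OF assms, of \<nu>] unfolding u_def by simp
qed

lemma Ifn_deriv_plus:
  assumes "Re w > 0"
  shows "(Ifn \<nu> has_field_derivative (Ifn (\<nu> + 1) w + of_real \<nu> / w * Ifn \<nu> w)) (at w)"
proof -
  have w0: "w \<noteq> 0" using assms by auto
  define u where "u = w / 2"
  have u0: "u \<noteq> 0" using w0 by (simp add: u_def)
  have p1: "u powr (of_real \<nu> - 1) = u powr (of_real \<nu>) / u"
    by (simp add: powr_diff u0)
  have p2: "u powr (of_real \<nu> + 1) = u powr (of_real \<nu>) * u"
    by (simp add: powr_add u0)
  have "Ifn (\<nu> + 1) w + of_real \<nu> / w * Ifn \<nu> w
     = u powr (of_real \<nu> + 1) * Pc (of_real \<nu> + 1) (u^2)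
       + of_real \<nu> / (2 * u) * (u powr (of_real \<nu>) * Pc (of_real \<nu>) (u ^ 2))"
    unfolding Ifn_def u_def[symmetric] by (simp add: u_def)
  also have "\<dots> = of_real \<nu> / 2 * u powr (of_real \<nu> - 1) * Pc (of_real \<nu>) (u ^ 2)
      + u powr (of_real \<nu>) * (u * Pc (of_real \<nu> + 1) (u ^ 2))"
    unfolding p1 p2 by (rule alg_plus[OF u0])
  finally show ?thesis using Ifn_deriv_raw[OF assms, of \<nu>] unfolding u_def by simp
qed

lemma Pc_holo_param: "\<exists>g'. \<forall>m. ((\<lambda>m. Pc m y) has_field_derivative g' m) (at m)"
proof -
  define f where "f n m = (\<Sum>k<n. coefP m k * y ^ k)" for n m
  have hol: "f n holomorphic_on UNIV" for n
    unfolding f_def coefP_def by (intro holomorphic_intros) auto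
  have hfd: "((f n) has_field_derivative deriv (f n) x) (at x)" for n x
    using holomorphic_derivI[OF hol] by blast
  have ul: "\<exists>d. 0 < d \<and> cball x d \<subseteq> UNIV \<and> uniform_limit (cball x d) f (\<lambda>m. Pc m y) sequentially" for x
  proof -
    obtain M where M0: "\<forall>m\<in>cball x 1. \<forall>k y. norm (coefP m k * y ^ k) \<le> M * (norm y ^ k / fact k)"
      using coefP_bound[OF compact_cball] by blast
    have M: "\<And>m k. m \<in> cball x 1 \<Longrightarrow> norm (coefP m k * y ^ k) \<le> M * (norm y ^ k / fact k)"
      using M0 by blast
    have sM: "summable (\<lambda>k. M * (norm y ^ k / fact k))"
      by (intro summable_mult summable_norm_exp_ser)
    have "uniform_limit (cball x 1) (\<lambda>n m. \<Sum>k<n. coefP m k * y ^ k) (\<lambda>m. suminf (\<lambda>k. coefP m k * y ^ k)) sequentially"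
      by (rule Weierstrass_m_test[OF M sM])
    then show ?thesis unfolding f_def[abs_def] Pc_def[abs_def] by (intro exI[of _ 1]) auto
  qed
  from has_complex_derivative_uniform_sequence[OF open_UNIV hfd ul]
  show ?thesis by blast
qed

lemma exp_quarter_sq: "exp (\<i> * of_real (pi / 4)) ^ 2 = \<i>"
proof -
  have "exp (\<i> * of_real (pi / 4)) ^ 2 = exp (\<i> * of_real (pi / 2))"
    by (simp add: exp_double[symmetric] power2_eq_square exp_add[symmetric])
  also have "\<dots> = \<i>" by (simp add: exp_eq_polar)
  finally show ?thesis .
qed

lemma exp_mquarter_sq: "exp (- \<i> * of_real (pi / 4)) ^ 2 = - \<i>"
proof -
  have "exp (- \<i> * of_real (pi / 4)) ^ 2 = exp (- \<i> * of_real (pi / 2))"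
    by (simp add: power2_eq_square exp_add[symmetric])
  also have "\<dots> = - \<i>" by (simp add: exp_eq_polar)
  finally show ?thesis .
qed

lemma Ifn_besselJ:
  assumes x: "x > 0"
  shows "Ifn \<nu> (exp (\<i> * of_real (pi / 4)) * of_real x)
       = exp (\<i> * of_real (pi * \<nu> / 2)) * besselJ \<nu> (exp (- \<i> * of_real (pi / 4)) * of_real x)"
proof -
  have a: "(exp (\<i> * of_real (pi / 4)) * of_real x / 2) powr (of_real \<nu>)
        = of_real ((x/2) powr \<nu>) * exp (\<i> * of_real (pi * \<nu> / 4))"
  proof -
    have "(exp (\<i> * of_real (pi / 4)) * of_real x / 2) = of_real (x/2) * exp (\<i> * of_real (pi / 4))"
      by simp
    also have "\<dots> powr (of_real \<nu>) = of_real (x/2) powr (of_real \<nu>) * exp (\<i> * of_real (pi / 4)) powr (of_real \<nu>)"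
      by (rule powr_times_real_left) (use x in auto)
    also have "exp (\<i> * of_real (pi / 4)) powr (of_real \<nu>) = exp (\<i> * of_real (pi / 4) * of_real \<nu>)"
      by (rule exp_powr_complex) (use pi_gt_zero in \<open>simp; linarith\<close>)+
    also have "of_real (x/2) powr (of_real \<nu>) = (of_real ((x/2) powr \<nu>) :: complex)"
      by (rule powr_of_real) (use x in simp)
    finally show ?thesis by (simp add: mult_ac)
  qed
  have b: "(exp (- \<i> * of_real (pi / 4)) * of_real x / 2) powr (of_real \<nu>)
        = of_real ((x/2) powr \<nu>) * exp (- \<i> * of_real (pi * \<nu> / 4))"
  proof -
    have "(exp (- \<i> * of_real (pi / 4)) * of_real x / 2) = of_real (x/2) * exp (- \<i> * of_real (pi / 4))"
      by simp
    also have "\<dots> powr (of_real \<nu>) = of_real (x/2) powr (of_real \<nu>) * exp (- \<i> * of_real (pi / 4)) powr (of_real \<nu>)"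
      by (rule powr_times_real_left) (use x in auto)
    also have "exp (- \<i> * of_real (pi / 4)) powr (of_real \<nu>) = exp (- \<i> * of_real (pi / 4) * of_real \<nu>)"
      by (rule exp_powr_complex) (use pi_gt_zero in \<open>simp; linarith\<close>)+
    also have "of_real (x/2) powr (of_real \<nu>) = (of_real ((x/2) powr \<nu>) :: complex)"
      by (rule powr_of_real) (use x in simp)
    finally show ?thesis by (simp add: mult_ac)
  qed
  have c: "(exp (\<i> * of_real (pi / 4)) * of_real x / 2) ^ 2 = - ((exp (- \<i> * of_real (pi / 4)) * of_real x / 2) ^ 2)"
    unfolding power_mult_distrib power_divide exp_quarter_sq exp_mquarter_sq by simp
  have d: "exp (\<i> * of_real (pi * \<nu> / 2)) * exp (- \<i> * of_real (pi * \<nu> / 4)) = exp (\<i> * of_real (pi * \<nu> / 4))"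
    by (simp add: exp_add[symmetric] field_simps)
  show ?thesis
    unfolding Ifn_def besselJ_Pc a b c
    by (simp only: d[symmetric] mult_ac)
qed

lemma cosh_le_exp_abs: "cosh (x::real) \<le> exp \<bar>x\<bar>"
proof -
  have a: "exp x \<le> exp \<bar>x\<bar>" "exp (-x) \<le> exp \<bar>x\<bar>" by auto
  have s: "exp x + exp (-x) \<le> 2 * exp \<bar>x\<bar>" using add_mono[OF a(1) a(2)] by simp
  show ?thesis unfolding cosh_field_def using s by simp
qed

lemma exp_half_le_cosh: "exp (t::real) / 2 \<le> cosh t"
  unfolding cosh_def by (simp add: divide_right_mono)

lemma exp_neg_le_power:
  fixes y :: real and m :: nat
  assumes "y > 0" "m > 0"
  shows "exp (- y) \<le> 1 / (y / m) ^ m"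
proof -
  have "(y / m) ^ m \<le> (1 + y / m) ^ m"
    using assms by (intro power_mono) auto
  also have "\<dots> \<le> exp y"
    using assms by (intro exp_ge_one_plus_x_over_n_power_n) auto
  finally have le: "(y / m) ^ m \<le> exp y" .
  have pos: "(y / m) ^ m > 0" using assms by simp
  have "exp (- y) = 1 / exp y" by (simp add: exp_minus inverse_eq_divide)
  also have "\<dots> \<le> 1 / (y / m) ^ m" by (rule divide_left_mono[OF le]) (use pos in auto)
  finally show ?thesis .
qed

lemma bound_core:
  fixes a \<nu> :: real
  assumes a: "a > 0"
  shows "\<exists>C\<ge>0. \<forall>t\<ge>0. \<forall>b\<ge>a. exp (- b * cosh t) * cosh (\<nu> * t) \<le> C * exp (- t)"
proof -
  define m :: nat where "m = nat \<lceil>\<bar>\<nu>\<bar>\<rceil> + 1"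
  have m0: "m > 0" unfolding m_def by simp
  have mge: "real m \<ge> \<bar>\<nu>\<bar> + 1" unfolding m_def by linarith
  define C where "C = (2 * real m / a) ^ m"
  have C0: "C \<ge> 0" unfolding C_def using a by simp
  have "exp (- b * cosh t) * cosh (\<nu> * t) \<le> C * exp (- t)" if t: "t \<ge> 0" and b: "b \<ge> a" for t b
  proof -
    define y where "y = a * exp t / 2"
    have y0: "y > 0" unfolding y_def using a by simp
    have "b * cosh t \<ge> y"
    proof -
      have "y \<le> a * cosh t" unfolding y_def using exp_half_le_cosh[of t] a
        by (simp add: mult_left_mono divide_le_eq)
      also have "\<dots> \<le> b * cosh t" using b by (intro mult_right_mono) (auto intro: order_trans[OF _ cosh_real_ge_1])
      finally show ?thesis .
    qed
    then have e1: "exp (- b * cosh t) \<le> exp (- y)" by simp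
    have e2: "exp (- y) \<le> 1 / (y / m) ^ m" by (rule exp_neg_le_power[OF y0 m0])
    have yp: "(y / m) ^ m = (a / (2 * m)) ^ m * exp (real m * t)"
      unfolding y_def by (simp add: power_divide power_mult_distrib exp_of_nat_mult[symmetric] field_simps)
    have e3: "cosh (\<nu> * t) \<le> exp (\<bar>\<nu>\<bar> * t)"
      using cosh_le_exp_abs[of "\<nu> * t"] t by (simp add: abs_mult)
    have e12: "exp (- b * cosh t) \<le> 1 / (y / m) ^ m" using e1 e2 by linarith
    have "exp (- b * cosh t) * cosh (\<nu> * t) \<le> (1 / (y / m) ^ m) * exp (\<bar>\<nu>\<bar> * t)"
      by (rule mult_mono[OF e12 e3]) (use y0 in auto)
    also have "\<dots> = C * exp ((\<bar>\<nu>\<bar> - real m) * t)"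
      unfolding yp C_def using a m0
      by (simp add: power_divide exp_diff left_diff_distrib field_simps)
    also have "\<dots> \<le> C * exp (- t)"
  proof -
    have "(\<bar>\<nu>\<bar> - real m) * t \<le> (-1) * t" using mge t by (intro mult_right_mono) auto
    then show ?thesis using C0 by (intro mult_left_mono) auto
  qed
    finally show ?thesis .
  qed
  then show ?thesis using C0 by blast
qed

lemma lebesgue_atLeast [simp]: "{c::real..} \<in> sets lebesgue"
  by (metis atLeast_borel sets_completionI_sets sets_lborel)

lemma integrable_exp_bound:
  fixes h :: "real \<Rightarrow> 'a::euclidean_space"
  assumes cont: "continuous_on {0..} h" and bd: "\<And>t. t \<ge> 0 \<Longrightarrow> norm (h t) \<le> C * exp (- t)"
    and c: "c \<ge> 0"
  shows "h integrable_on {c..}"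
proof (rule measurable_bounded_by_integrable_imp_integrable)
  show "h \<in> borel_measurable (lebesgue_on {c..})"
    by (rule continuous_imp_measurable_on_sets_lebesgue) (use cont c in \<open>auto intro: continuous_on_subset\<close>)
  show "(\<lambda>t. C * exp (- t)) integrable_on {c..}"
  proof -
    have "(\<lambda>t. exp (- t)) integrable_on {c..}" using integrable_on_exp_minus_to_infinity[of 1 c] by simp
    from integrable_on_cmult_left[OF this, of C] show ?thesis by simp
  qed
  show "norm (h t) \<le> C * exp (- t)" if "t \<in> {c..}" for t using that c bd by auto
qed simp

lemma tail_bound:
  fixes h :: "real \<Rightarrow> 'a::euclidean_space"
  assumes cont: "continuous_on {0..} h" and bd: "\<And>t. t \<ge> 0 \<Longrightarrow> norm (h t) \<le> C * exp (- t)"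
    and n: "n \<ge> 0"
  shows "norm (integral {0..} h - integral {0..n} h) \<le> C * exp (- n)"
proof -
  have i1: "h integrable_on {0..n}"
    by (rule integrable_continuous_interval) (use cont in \<open>auto intro: continuous_on_subset\<close>)
  have i2: "h integrable_on {n..}" by (rule integrable_exp_bound[OF cont bd n])
  have un: "{0..} = {0..n} \<union> {n..}" using n by auto
  have neg: "negligible ({0..n} \<inter> {n..})"
    by (rule negligible_subset[of "{n}"]) auto
  have "integral {0..} h = integral {0..n} h + integral {n..} h"
    unfolding un by (rule integral_Un[OF i1 i2 neg])
  then have eq1: "integral {0..} h - integral {0..n} h = integral {n..} h" by simp
  have le1: "norm (integral {n..} h) \<le> integral {n..} (\<lambda>t. C * exp (- t))"
  proof (rule integral_norm_bound_integral[OF i2])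
    show "(\<lambda>t. C * exp (- t)) integrable_on {n..}"
    proof -
      have "(\<lambda>t. exp (- t)) integrable_on {n..}" using integrable_on_exp_minus_to_infinity[of 1 n] by simp
      from integrable_on_cmult_left[OF this, of C] show ?thesis by simp
    qed
    show "norm (h t) \<le> C * exp (- t)" if "t \<in> {n..}" for t using that n bd by auto
  qed
  have eq2: "integral {n..} (\<lambda>t. C * exp (- t)) = C * exp (- n)"
  proof -
    have hi: "((\<lambda>t. exp (- t)) has_integral exp (- n)) {n..}"
      using has_integral_exp_minus_to_infinity[of 1 n] by simp
    show ?thesis by (rule integral_unique[OF has_integral_mult_right[OF hi]])
  qed
  show ?thesis unfolding eq1 using le1[unfolded eq2] .
qed

lemma tail_limit:
  fixes h :: "real \<Rightarrow> 'a::euclidean_space"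
  assumes cont: "continuous_on {0..} h" and bd: "\<And>t. t \<ge> 0 \<Longrightarrow> norm (h t) \<le> C * exp (- t)"
  shows "(\<lambda>n. integral {0..real n} h) \<longlonglongrightarrow> integral {0..} h"
proof -
  have "(\<lambda>n. C * exp (- real n)) \<longlonglongrightarrow> C * 0"
    by (intro tendsto_mult tendsto_const) real_asymp
  then have "(\<lambda>n. C * exp (- real n)) \<longlonglongrightarrow> 0" by simp
  then have "(\<lambda>n. integral {0..} h - integral {0..real n} h) \<longlonglongrightarrow> 0"
    by (rule Lim_null_comparison[rotated]) (auto intro!: always_eventually tail_bound[OF cont bd])
  from tendsto_diff[OF tendsto_const this, of "integral {0..} h"] show ?thesis by simp
qed

lemma cosh_of_real: "cosh (of_real t :: complex) = of_real (cosh t)"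
  by (simp add: cosh_def scaleR_conv_of_real exp_of_real[symmetric])

lemma sinh_of_real: "sinh (of_real t :: complex) = of_real (sinh t)"
  by (simp add: sinh_def scaleR_conv_of_real exp_of_real[symmetric])

lemma abs_sinh_le_cosh: "\<bar>sinh (t::real)\<bar> \<le> cosh t"
  using sinh_le_cosh_real[of "\<bar>t\<bar>"] by simp

definition kint :: "real \<Rightarrow> complex \<Rightarrow> real \<Rightarrow> complex" where
  "kint \<nu> w t = exp (- w * of_real (cosh t)) * of_real (cosh (\<nu> * t))"

lemma besselK_kint: "besselK \<nu> w = integral {0..} (kint \<nu> w)"
  unfolding besselK_def kint_def ..

lemma norm_kint: "norm (kint \<nu> w t) = exp (- Re w * cosh t) * cosh (\<nu> * t)"
  unfolding kint_def by (simp add: norm_mult)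

lemma continuous_kint [continuous_intros]: "continuous_on S (kint \<nu> w)"
  unfolding kint_def by (intro continuous_intros)

lemma kint_bound:
  assumes "a > 0"
  shows "\<exists>C\<ge>0. \<forall>w t. Re w \<ge> a \<longrightarrow> t \<ge> 0 \<longrightarrow> norm (kint \<nu> w t) \<le> C * exp (- t)"
proof -
  obtain C where C: "C \<ge> 0" "\<And>t b. t \<ge> 0 \<Longrightarrow> b \<ge> a \<Longrightarrow> exp (- b * cosh t) * cosh (\<nu> * t) \<le> C * exp (- t)"
    using bound_core[OF assms, of \<nu>] by blast
  show ?thesis using C unfolding norm_kint by blast
qed

lemma kint_integrable: assumes "Re w > 0" shows "kint \<nu> w integrable_on {0..}"
proof -
  obtain C where C: "\<And>t. t \<ge> 0 \<Longrightarrow> norm (kint \<nu> w t) \<le> C * exp (- t)"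
    using kint_bound[OF assms, of \<nu>] by auto
  show ?thesis by (rule integrable_exp_bound[OF continuous_kint C]) auto
qed

lemma kint_unif:
  assumes "a > 0"
  shows "\<exists>C\<ge>0. \<forall>w n. Re w \<ge> a \<longrightarrow> n \<ge> 0 \<longrightarrow> norm (besselK \<nu> w - integral {0..n} (kint \<nu> w)) \<le> C * exp (- n)"
proof -
  obtain C where C: "C \<ge> 0" "\<And>w t. Re w \<ge> a \<Longrightarrow> t \<ge> 0 \<Longrightarrow> norm (kint \<nu> w t) \<le> C * exp (- t)"
    using kint_bound[OF assms, of \<nu>] by auto
  have "norm (besselK \<nu> w - integral {0..n} (kint \<nu> w)) \<le> C * exp (- n)" if "Re w \<ge> a" "n \<ge> 0" for w n
    unfolding besselK_kint by (rule tail_bound[OF continuous_kint C(2)]) (use that in auto)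
  then show ?thesis using C(1) by blast
qed

lemma kint_lim:
  assumes "Re w > 0"
  shows "(\<lambda>n. integral {0..real n} (kint \<nu> w)) \<longlonglongrightarrow> besselK \<nu> w"
proof -
  obtain C where C: "\<And>t. t \<ge> 0 \<Longrightarrow> norm (kint \<nu> w t) \<le> C * exp (- t)"
    using kint_bound[OF assms, of \<nu>] by auto
  show ?thesis unfolding besselK_kint by (rule tail_limit[OF continuous_kint C])
qed

lemma cosh_prod: "cosh (t::real) * cosh (\<nu> * t) = (cosh ((\<nu> + 1) * t) + cosh ((\<nu> - 1) * t)) / 2"
  by (simp add: distrib_right left_diff_distrib cosh_add cosh_diff)

lemma sinh_prod: "sinh (t::real) * sinh (\<nu> * t) = (cosh ((\<nu> + 1) * t) - cosh ((\<nu> - 1) * t)) / 2"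
  by (simp add: distrib_right left_diff_distrib cosh_add cosh_diff)

lemma alg3: "(A::complex) * B = (P + Q) / 2 \<Longrightarrow> - A * E * B = - (E * P + E * Q) / 2"
proof -
  assume h: "A * B = (P + Q) / 2"
  have "- A * E * B = - E * (A * B)" by (simp add: ac_simps)
  also have "\<dots> = - E * ((P + Q) / 2)" by (simp only: h)
  also have "\<dots> = - (E * P + E * Q) / 2" by (simp add: algebra_simps)
  finally show ?thesis .
qed

lemma kint_deriv_w:
  "((\<lambda>w. kint \<nu> w t) has_field_derivative - (kint (\<nu> + 1) w t + kint (\<nu> - 1) w t) / 2) (at w within U)"
proof -
  have d: "((\<lambda>w. kint \<nu> w t) has_field_derivative (- of_real (cosh t)) * exp (- w * of_real (cosh t)) * of_real (cosh (\<nu> * t))) (at w within U)"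
    unfolding kint_def by (auto intro!: derivative_eq_intros)
  have e: "(- of_real (cosh t)) * exp (- w * of_real (cosh t)) * of_real (cosh (\<nu> * t))
      = - (kint (\<nu> + 1) w t + kint (\<nu> - 1) w t) / 2"
  proof -
    have h: "(of_real (cosh t) * of_real (cosh (\<nu> * t)) :: complex) = (of_real (cosh ((\<nu> + 1) * t)) + of_real (cosh ((\<nu> - 1) * t))) / 2"
      unfolding of_real_mult[symmetric] cosh_prod by simp
    show ?thesis unfolding kint_def by (rule alg3[OF h])
  qed
  show ?thesis using d unfolding e .
qed

lemma besselK_deriv_w:
  assumes w0: "Re w0 > 0"
  shows "((\<lambda>w. besselK \<nu> w) has_field_derivative - (besselK (\<nu> + 1) w0 + besselK (\<nu> - 1) w0) / 2) (at w0)"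
proof -
  define U where "U = {w::complex. Re w > 0}"
  have oU: "open U" unfolding U_def by (simp add: open_halfspace_Re_gt)
  have cU: "convex U" unfolding U_def by (simp add: convex_halfspace_Re_gt)
  define f where "f n w = integral {0..real n} (kint \<nu> w)" for n w
  define f' where "f' n w = - (integral {0..real n} (kint (\<nu> + 1) w) + integral {0..real n} (kint (\<nu> - 1) w)) / 2" for n w
  have hfd: "((f n) has_field_derivative f' n w) (at w)" if "w \<in> U" for n w
  proof -
    have "((\<lambda>w. integral (cbox 0 (real n)) (kint \<nu> w)) has_field_derivative
          integral (cbox 0 (real n)) (\<lambda>t. - (kint (\<nu> + 1) w t + kint (\<nu> - 1) w t) / 2)) (at w within U)"
    proof (rule leibniz_rule_field_derivative[OF kint_deriv_w])
      show "kint \<nu> x integrable_on cbox 0 (real n)" for x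
        by (rule integrable_continuous) (rule continuous_kint)
      show "continuous_on (U \<times> cbox 0 (real n)) (\<lambda>(x, t). - (kint (\<nu> + 1) x t + kint (\<nu> - 1) x t) / 2)"
        unfolding kint_def by (auto simp: case_prod_beta intro!: continuous_intros)
    qed (use that cU in auto)
    moreover have "integral (cbox 0 (real n)) (\<lambda>t. - (kint (\<nu> + 1) w t + kint (\<nu> - 1) w t) / 2) = f' n w"
    proof -
      have i1: "kint (\<nu>+1) w integrable_on {0..real n}" "kint (\<nu>-1) w integrable_on {0..real n}"
        by (rule integrable_continuous_interval, rule continuous_kint)+
      have "((\<lambda>t. - (kint (\<nu> + 1) w t + kint (\<nu> - 1) w t) / 2) has_integral
             - (integral {0..real n} (kint (\<nu> + 1) w) + integral {0..real n} (kint (\<nu> - 1) w)) / 2) {0..real n}"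
        by (intro has_integral_divide has_integral_neg has_integral_add integrable_integral i1)
      then show ?thesis unfolding f'_def cbox_interval by (rule integral_unique)
    qed
    ultimately show ?thesis
      using at_within_open[OF that oU] unfolding f_def cbox_interval by simp
  qed
  have ulim: "\<exists>d. 0 < d \<and> cball w d \<subseteq> U \<and> uniform_limit (cball w d) f (besselK \<nu>) sequentially"
    if "w \<in> U" for w
  proof -
    define a where "a = Re w / 2"
    have a0: "a > 0" using that unfolding a_def U_def by simp
    have Rea: "Re z \<ge> a" if "z \<in> cball w a" for z
    proof -
      have "\<bar>Re w - Re z\<bar> \<le> norm (w - z)" using abs_Re_le_cmod[of "w - z"] by simp
      also have "\<dots> \<le> a" using that by (simp add: dist_norm)
      finally show ?thesis unfolding a_def by linarith
    qed
    have sub: "cball w a \<subseteq> U" using Rea a0 unfolding U_def by force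
    obtain C where C: "C \<ge> 0" "\<And>z n. Re z \<ge> a \<Longrightarrow> n \<ge> 0 \<Longrightarrow> norm (besselK \<nu> z - integral {0..n} (kint \<nu> z)) \<le> C * exp (- n)"
      using kint_unif[OF a0, of \<nu>] by auto
    have "uniform_limit (cball w a) f (besselK \<nu>) sequentially"
    proof (rule uniform_limitI)
      fix e :: real assume e: "e > 0"
      have "(\<lambda>n. C * exp (- real n)) \<longlonglongrightarrow> C * 0"
        by (intro tendsto_mult tendsto_const) real_asymp
      then have "eventually (\<lambda>n. C * exp (- real n) < e) sequentially"
        using e by (simp add: order_tendsto_iff)
      then show "eventually (\<lambda>n. \<forall>z\<in>cball w a. dist (f n z) (besselK \<nu> z) < e) sequentially"
      proof (rule eventually_mono)
        fix n assume n: "C * exp (- real n) < e"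
        show "\<forall>z\<in>cball w a. dist (f n z) (besselK \<nu> z) < e"
        proof
          fix z assume "z \<in> cball w a"
          then have "norm (besselK \<nu> z - f n z) \<le> C * exp (- real n)"
            unfolding f_def using C(2)[OF Rea] by auto
          then show "dist (f n z) (besselK \<nu> z) < e" using n by (simp add: dist_norm norm_minus_commute)
        qed
      qed
    qed
    then show ?thesis using a0 sub by blast
  qed
  obtain g' where g': "\<And>w. w \<in> U \<Longrightarrow> (besselK \<nu> has_field_derivative g' w) (at w) \<and> (\<lambda>n. f' n w) \<longlonglongrightarrow> g' w"
    using has_complex_derivative_uniform_sequence[OF oU hfd ulim] by blast
  have w0U: "w0 \<in> U" using w0 unfolding U_def by simp
  have "(\<lambda>n. f' n w0) \<longlonglongrightarrow> - (besselK (\<nu> + 1) w0 + besselK (\<nu> - 1) w0) / 2"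
    unfolding f'_def by (intro tendsto_intros kint_lim w0) simp
  with g'[OF w0U] have "g' w0 = - (besselK (\<nu> + 1) w0 + besselK (\<nu> - 1) w0) / 2"
    using LIMSEQ_unique by blast
  with g'[OF w0U] show ?thesis by simp
qed

lemma alg4: "(E::complex) * (n * A - w * ((P - Q) / 2)) = n * (E * A) + w / 2 * (E * Q - E * P)"
  by (simp add: field_simps)

lemma besselK_rec:
  assumes w: "Re w > 0"
  shows "w * (besselK (\<nu> - 1) w - besselK (\<nu> + 1) w) = - 2 * of_real \<nu> * besselK \<nu> w"
proof -
  define \<Phi> where "\<Phi> t = exp (- w * of_real (cosh t)) * of_real (sinh (\<nu> * t))" for t
  define \<Phi>' where "\<Phi>' t = of_real \<nu> * kint \<nu> w t + w / 2 * (kint (\<nu> - 1) w t - kint (\<nu> + 1) w t)" for t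
  define \<Psi> where "\<Psi> z = exp (- w * cosh z) * sinh (of_real \<nu> * z)" for z :: complex
  have \<Psi>\<Phi>: "\<Psi> (of_real t) = \<Phi> t" for t
    unfolding \<Psi>_def \<Phi>_def by (simp add: cosh_of_real sinh_of_real flip: of_real_mult)
  have dPsi: "(\<Psi> has_field_derivative
      exp (- w * cosh z) * (of_real \<nu> * cosh (of_real \<nu> * z) - w * sinh z * sinh (of_real \<nu> * z))) (at z)" for z
    unfolding \<Psi>_def by (auto intro!: derivative_eq_intros simp: algebra_simps)
  have dval: "exp (- w * cosh (of_real t)) * (of_real \<nu> * cosh (of_real \<nu> * of_real t) - w * sinh (of_real t) * sinh (of_real \<nu> * of_real t))
      = \<Phi>' t" for t
  proof -
    have h: "(of_real (sinh t) * of_real (sinh (\<nu> * t)) :: complex) = (of_real (cosh ((\<nu> + 1) * t)) - of_real (cosh ((\<nu> - 1) * t))) / 2"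
      unfolding of_real_mult[symmetric] sinh_prod by simp
    define E where "E = exp (- w * of_real (cosh t))"
    have "exp (- w * cosh (of_real t)) * (of_real \<nu> * cosh (of_real \<nu> * of_real t) - w * sinh (of_real t) * sinh (of_real \<nu> * of_real t))
       = E * (of_real \<nu> * of_real (cosh (\<nu> * t)) - w * (of_real (sinh t) * of_real (sinh (\<nu> * t))))"
      unfolding E_def by (simp add: cosh_of_real sinh_of_real mult_ac flip: of_real_mult)
    also have "\<dots> = E * (of_real \<nu> * of_real (cosh (\<nu> * t)) - w * ((of_real (cosh ((\<nu> + 1) * t)) - of_real (cosh ((\<nu> - 1) * t))) / 2))"
      by (simp only: h)
    also have "\<dots> = \<Phi>' t" unfolding \<Phi>'_def kint_def E_def[symmetric] by (rule alg4)
    finally show ?thesis .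
  qed
  have dPhi: "(\<Phi> has_vector_derivative \<Phi>' t) (at t within S)" for t S
  proof -
    have "((\<lambda>x. \<Psi> (of_real x)) has_vector_derivative \<Phi>' t) (at t within S)"
      using has_vector_derivative_real_field[OF dPsi[of "of_real t"]] unfolding dval .
    then show ?thesis unfolding \<Psi>\<Phi> .
  qed
  have ftc: "(\<Phi>' has_integral \<Phi> n) {0..n}" if "n \<ge> 0" for n
    using fundamental_theorem_of_calculus[OF that, of \<Phi> \<Phi>'] dPhi by (simp add: \<Phi>_def)
  define F where "F \<mu> n = integral {0..real n} (kint \<mu> w)" for \<mu> n
  have int_eq: "\<Phi> (real n) = of_real \<nu> * F \<nu> n + w / 2 * (F (\<nu> - 1) n - F (\<nu> + 1) n)" for n
  proof -
    have i: "kint \<mu> w integrable_on {0..real n}" for \<mu>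
      by (rule integrable_continuous_interval, rule continuous_kint)
    have "(\<Phi>' has_integral (of_real \<nu> * F \<nu> n + w / 2 * (F (\<nu> - 1) n - F (\<nu> + 1) n))) {0..real n}"
      unfolding \<Phi>'_def F_def
      by (intro has_integral_add has_integral_mult_right has_integral_diff integrable_integral i)
    with ftc[of "real n"] show ?thesis using has_integral_unique by auto
  qed
  have lim1: "(\<lambda>n. \<Phi> (real n)) \<longlonglongrightarrow> of_real \<nu> * besselK \<nu> w + w / 2 * (besselK (\<nu> - 1) w - besselK (\<nu> + 1) w)"
    unfolding int_eq F_def by (intro tendsto_intros kint_lim w)
  obtain C where C: "\<And>t. t \<ge> 0 \<Longrightarrow> norm (kint \<nu> w t) \<le> C * exp (- t)"
    using kint_bound[OF w, of \<nu>] by auto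
  have lim2: "(\<lambda>n. \<Phi> (real n)) \<longlonglongrightarrow> 0"
  proof -
    have "(\<lambda>n. C * exp (- real n)) \<longlonglongrightarrow> C * 0"
      by (intro tendsto_mult tendsto_const) real_asymp
    then have l: "(\<lambda>n. C * exp (- real n)) \<longlonglongrightarrow> 0" by simp
    have "norm (\<Phi> (real n)) \<le> C * exp (- real n)" for n
    proof -
      have "norm (\<Phi> (real n)) = exp (- Re w * cosh (real n)) * \<bar>sinh (\<nu> * real n)\<bar>"
        unfolding \<Phi>_def by (simp add: norm_mult)
      also have "\<dots> \<le> norm (kint \<nu> w (real n))"
        unfolding norm_kint by (intro mult_left_mono abs_sinh_le_cosh) auto
      also have "\<dots> \<le> C * exp (- real n)" by (rule C) simp
      finally show ?thesis .
    qed
    then show ?thesis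
      by (intro Lim_null_comparison[OF always_eventually l]) auto
  qed
  have "of_real \<nu> * besselK \<nu> w + w / 2 * (besselK (\<nu> - 1) w - besselK (\<nu> + 1) w) = 0"
    using LIMSEQ_unique[OF lim1 lim2] .
  then show ?thesis by (simp add: field_simps)
qed

lemma besselK_deriv_minus:
  assumes w: "Re w > 0"
  shows "((\<lambda>w. besselK \<nu> w) has_field_derivative (- besselK (\<nu> - 1) w - of_real \<nu> / w * besselK \<nu> w)) (at w)"
proof -
  have w0: "w \<noteq> 0" using w by auto
  have eq: "- (besselK (\<nu> + 1) w + besselK (\<nu> - 1) w) / 2 = - besselK (\<nu> - 1) w - of_real \<nu> / w * besselK \<nu> w"
    using besselK_rec[OF w, of \<nu>] w0 by (simp add: field_simps)
  show ?thesis using besselK_deriv_w[OF w, of \<nu>] unfolding eq .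
qed

lemma besselK_cont_nu:
  assumes w: "Re w > 0"
  shows "isCont (\<lambda>\<nu>. besselK \<nu> w) \<nu>0"
proof -
  define N where "N = \<bar>\<nu>0\<bar> + 1"
  obtain C where C: "\<And>t. t \<ge> 0 \<Longrightarrow> norm (kint N w t) \<le> C * exp (- t)"
    using kint_bound[OF w, of N] by auto
  have C': "norm (kint \<nu> w t) \<le> C * exp (- t)" if "\<nu> \<in> cball \<nu>0 1" "t \<ge> 0" for \<nu> t
  proof -
    have "\<bar>\<nu>\<bar> \<le> N" using that unfolding N_def by (auto simp: dist_real_def)
    then have "\<bar>\<nu> * t\<bar> \<le> N * t" using that by (simp add: abs_mult mult_right_mono)
    then have "cosh (\<nu> * t) \<le> cosh (N * t)"
      using cosh_real_nonneg_le_iff[of "\<bar>\<nu> * t\<bar>" "N * t"] that N_def by simp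
    then have "norm (kint \<nu> w t) \<le> norm (kint N w t)"
      unfolding norm_kint by (intro mult_left_mono) auto
    also have "\<dots> \<le> C * exp (- t)" by (rule C[OF that(2)])
    finally show ?thesis .
  qed
  define f where "f n \<nu> = integral {0..real n} (kint \<nu> w)" for n \<nu>
  have cont: "continuous_on (cball \<nu>0 1) (f n)" for n
  proof -
    have "continuous_on (cball \<nu>0 1) (\<lambda>\<nu>. integral (cbox 0 (real n)) (kint \<nu> w))"
      by (rule integral_continuous_on_param) (auto simp: kint_def case_prod_beta intro!: continuous_intros)
    then show ?thesis unfolding f_def cbox_interval .
  qed
  have ul: "uniform_limit (cball \<nu>0 1) f (\<lambda>\<nu>. besselK \<nu> w) sequentially"
  proof (rule uniform_limitI)
    fix e :: real assume e: "e > 0"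
    have "(\<lambda>n. C * exp (- real n)) \<longlonglongrightarrow> C * 0"
      by (intro tendsto_mult tendsto_const) real_asymp
    then have "eventually (\<lambda>n. C * exp (- real n) < e) sequentially"
      using e by (simp add: order_tendsto_iff)
    then show "eventually (\<lambda>n. \<forall>\<nu>\<in>cball \<nu>0 1. dist (f n \<nu>) (besselK \<nu> w) < e) sequentially"
    proof (rule eventually_mono)
      fix n assume n: "C * exp (- real n) < e"
      show "\<forall>\<nu>\<in>cball \<nu>0 1. dist (f n \<nu>) (besselK \<nu> w) < e"
      proof
        fix \<nu> assume \<nu>: "\<nu> \<in> cball \<nu>0 1"
        have "norm (besselK \<nu> w - f n \<nu>) \<le> C * exp (- real n)"
          unfolding f_def besselK_kint by (rule tail_bound[OF continuous_kint C'[OF \<nu>]]) auto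
        then show "dist (f n \<nu>) (besselK \<nu> w) < e" using n by (simp add: dist_norm norm_minus_commute)
      qed
    qed
  qed
  have "continuous_on (cball \<nu>0 1) (\<lambda>\<nu>. besselK \<nu> w)"
    by (rule uniform_limit_theorem[OF always_eventually ul]) (auto intro: cont)
  then show ?thesis by (rule continuous_on_interior) simp
qed

definition Aint :: "real \<Rightarrow> real \<Rightarrow> real" where
  "Aint \<nu> x = integral {0..} (\<lambda>t. exp (- x * cosh t) * exp (\<nu> * t))"
definition Bint :: "real \<Rightarrow> real \<Rightarrow> real" where
  "Bint \<nu> x = integral {0..} (\<lambda>t. exp (- x * cosh t) * exp (- \<nu> * t))"
definition phi :: "real \<Rightarrow> real \<Rightarrow> real \<Rightarrow> real" where
  "phi \<nu> x u = u powr (\<nu> - 1) * exp (- u - x ^ 2 / (4 * u))"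

lemma exp_le_2cosh: "exp (y::real) \<le> 2 * cosh y"
  by (simp add: cosh_field_def)

lemma AB_bound:
  assumes x: "x > 0"
  shows "\<exists>C. \<forall>t\<ge>0. norm (exp (- x * cosh t) * exp (\<nu> * t)) \<le> C * exp (- t)"
proof -
  obtain C where C: "C \<ge> 0" "\<And>t. t \<ge> 0 \<Longrightarrow> exp (- x * cosh t) * cosh (\<nu> * t) \<le> C * exp (- t)"
    using bound_core[OF x, of \<nu>] by auto
  have "norm (exp (- x * cosh t) * exp (\<nu> * t)) \<le> (2 * C) * exp (- t)" if "t \<ge> 0" for t
  proof -
    have "norm (exp (- x * cosh t) * exp (\<nu> * t)) = exp (- x * cosh t) * exp (\<nu> * t)" by simp
    also have "\<dots> \<le> exp (- x * cosh t) * (2 * cosh (\<nu> * t))"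
      by (intro mult_left_mono exp_le_2cosh) auto
    also have "\<dots> \<le> (2 * C) * exp (- t)" using C(2)[OF that] by simp
    finally show ?thesis .
  qed
  then show ?thesis by blast
qed

lemma A_integrable: "(x::real) > 0 \<Longrightarrow> (\<lambda>t. exp (- x * cosh t) * exp (\<nu> * t)) integrable_on {0..}"
  using AB_bound[of x \<nu>] by (auto intro!: integrable_exp_bound continuous_intros)

lemma besselK_real:
  assumes x: "x > 0"
  shows "besselK \<nu> (of_real x) = of_real ((Aint \<nu> x + Bint \<nu> x) / 2)"
proof -
  have iA: "(\<lambda>t. exp (- x * cosh t) * exp (\<nu> * t)) integrable_on {0..}" by (rule A_integrable[OF x])
  have iB: "(\<lambda>t. exp (- x * cosh t) * exp ((- \<nu>) * t)) integrable_on {0..}" by (rule A_integrable[OF x])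
  have "((\<lambda>t. (exp (- x * cosh t) * exp (\<nu> * t) + exp (- x * cosh t) * exp (- \<nu> * t)) / 2)
         has_integral (Aint \<nu> x + Bint \<nu> x) / 2) {0..}"
    unfolding Aint_def Bint_def using iA iB
    by (intro has_integral_divide has_integral_add integrable_integral) auto
  then have "((\<lambda>t. of_real ((exp (- x * cosh t) * exp (\<nu> * t) + exp (- x * cosh t) * exp (- \<nu> * t)) / 2) :: complex)
         has_integral of_real ((Aint \<nu> x + Bint \<nu> x) / 2)) {0..}"
    by (rule has_integral_of_real)
  moreover have "of_real ((exp (- x * cosh t) * exp (\<nu> * t) + exp (- x * cosh t) * exp (- \<nu> * t)) / 2) = kint \<nu> (of_real x) t" for t
  proof -
    have k: "kint \<nu> (of_real x) t = of_real (exp (- x * cosh t) * cosh (\<nu> * t))"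
      unfolding kint_def by (simp add: exp_of_real flip: of_real_mult of_real_minus)
    have "cosh (\<nu> * t) = (exp (\<nu> * t) + exp (- \<nu> * t)) / 2" by (simp add: cosh_field_def)
    then have h: "exp (- x * cosh t) * cosh (\<nu> * t) = (exp (- x * cosh t) * exp (\<nu> * t) + exp (- x * cosh t) * exp (- \<nu> * t)) / 2"
      by (simp add: algebra_simps add_divide_distrib)
    show ?thesis unfolding k h ..
  qed
  ultimately have "(kint \<nu> (of_real x) has_integral of_real ((Aint \<nu> x + Bint \<nu> x) / 2)) {0..}" by simp
  then show ?thesis unfolding besselK_kint by (rule integral_unique)
qed

lemma phi_cont: "x > 0 \<Longrightarrow> continuous_on {x/2..y} (phi \<nu> x)"
  unfolding phi_def by (intro continuous_intros) auto

lemma A_sub: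
  fixes x b :: real
  assumes x: "x > 0" and b: "b \<ge> 0"
  shows "((\<lambda>t. (x/2) powr \<nu> * (exp (- x * cosh t) * exp (\<nu> * t))) has_integral
           integral {x/2..(x/2) * exp b} (phi \<nu> x)) {0..b}"
proof -
  define g where "g t = (x/2) * exp t" for t
  have gpos: "g t > 0" for t unfolding g_def using x by simp
  have sub: "((\<lambda>t. g t *\<^sub>R phi \<nu> x (g t)) has_integral integral {g 0..g b} (phi \<nu> x)) {0..b}"
  proof (rule has_integral_substitution[where c = "x/2" and d = "(x/2) * exp b"])
    show "0 \<le> b" by (rule b)
    show "g 0 \<le> g b" unfolding g_def using x b by simp
    show "g ` {0..b} \<subseteq> {x / 2..x / 2 * exp b}" unfolding g_def using x by auto
    show "continuous_on {x / 2..x / 2 * exp b} (phi \<nu> x)" by (rule phi_cont[OF x])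
    show "(g has_field_derivative g t) (at t within {0..b})" for t
      unfolding g_def by (auto intro!: derivative_eq_intros)
  qed
  have eq: "g t *\<^sub>R phi \<nu> x (g t) = (x/2) powr \<nu> * (exp (- x * cosh t) * exp (\<nu> * t))" for t
  proof -
    have p1: "g t * g t powr (\<nu> - 1) = g t powr \<nu>"
      using powr_mult_base[of "g t" "\<nu> - 1"] gpos[of t] by simp
    have p2: "g t powr \<nu> = (x/2) powr \<nu> * exp (\<nu> * t)"
      unfolding g_def powr_mult exp_powr_real by (simp add: mult_ac)
    have p3: "- g t - x ^ 2 / (4 * g t) = - x * cosh t"
      unfolding g_def cosh_field_def using x by (simp add: field_simps exp_minus power2_eq_square)
    have "g t *\<^sub>R phi \<nu> x (g t) = (g t * g t powr (\<nu> - 1)) * exp (- g t - x ^ 2 / (4 * g t))"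
      unfolding phi_def by simp
    also have "\<dots> = (x/2) powr \<nu> * (exp (- x * cosh t) * exp (\<nu> * t))"
      unfolding p1 p2 p3 by simp
    finally show ?thesis .
  qed
  show ?thesis using sub unfolding eq by (simp add: g_def)
qed

lemma A_sub':
  fixes x y :: real
  assumes x: "x > 0" and y: "y \<ge> x / 2"
  shows "integral {x/2..y} (phi \<nu> x) = (x/2) powr \<nu> * integral {0..ln (2 * y / x)} (\<lambda>t. exp (- x * cosh t) * exp (\<nu> * t))"
proof -
  define b where "b = ln (2 * y / x)"
  have b0: "b \<ge> 0" unfolding b_def using x y by (simp add: field_simps)
  have yb: "(x/2) * exp b = y" unfolding b_def using x y by simp
  have h1: "((\<lambda>t. (x/2) powr \<nu> * (exp (- x * cosh t) * exp (\<nu> * t))) has_integral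
           integral {x/2..y} (phi \<nu> x)) {0..b}"
    using A_sub[OF x b0, of \<nu>] unfolding yb .
  have "(\<lambda>t. exp (- x * cosh t) * exp (\<nu> * t)) integrable_on {0..b}"
    by (intro integrable_continuous_interval continuous_intros)
  then have h2: "((\<lambda>t. (x/2) powr \<nu> * (exp (- x * cosh t) * exp (\<nu> * t))) has_integral
           (x/2) powr \<nu> * integral {0..b} (\<lambda>t. exp (- x * cosh t) * exp (\<nu> * t))) {0..b}"
    by (intro has_integral_mult_right integrable_integral)
  show ?thesis using has_integral_unique[OF h1 h2] unfolding b_def .
qed

lemma A_lim_top:
  fixes x :: real
  assumes x: "x > 0"
  shows "((\<lambda>y. integral {0..y} (\<lambda>t. exp (- x * cosh t) * exp (\<nu> * t))) \<longlongrightarrow> Aint \<nu> x) at_top"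
proof -
  obtain C where C: "\<And>t. t \<ge> 0 \<Longrightarrow> norm (exp (- x * cosh t) * exp (\<nu> * t)) \<le> C * exp (- t)"
    using AB_bound[OF x, of \<nu>] by auto
  have l: "((\<lambda>y. C * exp (- y)) \<longlongrightarrow> 0) at_top" by real_asymp
  have "((\<lambda>y. Aint \<nu> x - integral {0..y} (\<lambda>t. exp (- x * cosh t) * exp (\<nu> * t))) \<longlongrightarrow> 0) at_top"
  proof (rule Lim_null_comparison[OF _ l])
    show "\<forall>\<^sub>F y in at_top. norm (Aint \<nu> x - integral {0..y} (\<lambda>t. exp (- x * cosh t) * exp (\<nu> * t))) \<le> C * exp (- y)"
      using eventually_ge_at_top[of 0]
      by eventually_elim (unfold Aint_def, rule tail_bound[OF _ C], auto intro!: continuous_intros)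
  qed
  from tendsto_diff[OF tendsto_const this, of "Aint \<nu> x"] show ?thesis by simp
qed

lemma phi_has_integral:
  fixes x :: real
  assumes x: "x > 0"
  shows "(phi \<nu> x has_integral (x/2) powr \<nu> * Aint \<nu> x) {x/2..}"
proof (rule has_integral_to_inf)
  show "phi \<nu> x integrable_on {x / 2..y}" for y
    by (rule integrable_continuous_interval[OF phi_cont[OF x]])
  show "0 \<le> phi \<nu> x y" if "x / 2 \<le> y" for y unfolding phi_def by simp
  have f: "filterlim (\<lambda>y. ln (2 * y / x)) at_top at_top"
    using x by real_asymp
  have "((\<lambda>y. (x/2) powr \<nu> * integral {0..ln (2 * y / x)} (\<lambda>t. exp (- x * cosh t) * exp (\<nu> * t))) \<longlongrightarrow> (x/2) powr \<nu> * Aint \<nu> x) at_top"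
    by (intro tendsto_mult tendsto_const filterlim_compose[OF A_lim_top[OF x] f])
  then show "((\<lambda>y. integral {x / 2..y} (phi \<nu> x)) \<longlongrightarrow> (x/2) powr \<nu> * Aint \<nu> x) at_top"
  proof (rule Lim_transform_eventually)
    show "\<forall>\<^sub>F y in at_top. (x/2) powr \<nu> * integral {0..ln (2 * y / x)} (\<lambda>t. exp (- x * cosh t) * exp (\<nu> * t)) = integral {x / 2..y} (phi \<nu> x)"
      using eventually_ge_at_top[of "x/2"] by eventually_elim (rule A_sub'[OF x, symmetric])
  qed
qed

lemma Phi_lim:
  assumes nu: "\<nu> > 0"
  shows "((\<lambda>x. (x/2) powr \<nu> * Aint \<nu> x) \<longlongrightarrow> Gamma \<nu>) (at_right 0)"
proof (rule tendsto_at_right_sequentially[of 0 1])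
  fix S :: "nat \<Rightarrow> real"
  assume S0: "\<And>n. 0 < S n" and S1: "\<And>n. S n < 1" and "decseq S" and Slim: "S \<longlonglongrightarrow> 0"
  define f where "f k u = (if u \<in> {S k / 2..} then phi \<nu> (S k) u else 0)" for k u
  define h where "h u = u powr (\<nu> - 1) / exp u" for u :: real
  have hk: "(f k has_integral (S k / 2) powr \<nu> * Aint \<nu> (S k)) {0..}" for k
  proof -
    have sub: "{S k / 2..} \<subseteq> {0..}" using S0[of k] by auto
    show ?thesis unfolding f_def by (subst has_integral_restrict[OF sub]) (rule phi_has_integral[OF S0[of k]])
  qed
  have hG: "(h has_integral Gamma \<nu>) {0..}" unfolding h_def by (rule Gamma_integral_real[OF nu])
  have bd: "norm (f k u) \<le> h u" if "u \<in> {0..}" for k u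
  proof (cases "u \<in> {S k / 2..}")
    case True
    then have u0: "u > 0" using S0[of k] by auto
    have "norm (f k u) = u powr (\<nu> - 1) * exp (- u - (S k) ^ 2 / (4 * u))"
      using True unfolding f_def phi_def by simp
    also have "\<dots> \<le> u powr (\<nu> - 1) * exp (- u)"
      using u0 by (intro mult_left_mono) auto
    also have "\<dots> = h u" unfolding h_def by (simp add: exp_minus field_simps)
    finally show ?thesis .
  next
    case False
    then show ?thesis unfolding f_def h_def by simp
  qed
  have conv: "(\<lambda>k. f k u) \<longlonglongrightarrow> h u" if "u \<in> {0..}" for u
  proof (cases "u = 0")
    case True
    have "f k u = 0" for k using True S0[of k] unfolding f_def by auto
    then show ?thesis using True unfolding h_def by simp
  next
    case False
    then have u0: "u > 0" using that by simp
    have ev: "eventually (\<lambda>k. S k < 2 * u) sequentially"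
      using Slim u0 by (intro order_tendstoD) auto
    have l: "(\<lambda>k. phi \<nu> (S k) u) \<longlonglongrightarrow> u powr (\<nu> - 1) * exp (- u - 0 ^ 2 / (4 * u))"
      unfolding phi_def by (intro tendsto_intros Slim) (use u0 in auto)
    have "(\<lambda>k. phi \<nu> (S k) u) \<longlonglongrightarrow> h u"
      using l unfolding h_def by (simp add: exp_minus field_simps)
    then show ?thesis
    proof (rule Lim_transform_eventually)
      show "\<forall>\<^sub>F k in sequentially. phi \<nu> (S k) u = f k u"
        using ev by eventually_elim (auto simp: f_def)
    qed
  qed
  have "(\<lambda>k. integral {0..} (f k)) \<longlonglongrightarrow> integral {0..} h"
    by (rule dominated_convergence(2)[where h = h])
       (use hk hG bd conv in \<open>auto simp: has_integral_integrable\<close>)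
  moreover have "integral {0..} (f k) = (S k / 2) powr \<nu> * Aint \<nu> (S k)" for k
    using hk by (rule integral_unique)
  moreover have "integral {0..} h = Gamma \<nu>" using hG by (rule integral_unique)
  ultimately show "(\<lambda>n. (S n / 2) powr \<nu> * Aint \<nu> (S n)) \<longlonglongrightarrow> Gamma \<nu>" by simp
qed simp

lemma B_small:
  assumes nu: "\<nu> > 0"
  shows "((\<lambda>x. (x/2) powr \<nu> * Bint \<nu> x) \<longlongrightarrow> 0) (at_right 0)"
proof -
  have bnd: "norm ((x/2) powr \<nu> * Bint \<nu> x) \<le> (x/2) powr \<nu> / \<nu>" if x: "x > 0" for x
  proof -
    have iB: "(\<lambda>t. exp (- x * cosh t) * exp ((- \<nu>) * t)) integrable_on {0..}" by (rule A_integrable[OF x])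
    have hE: "((\<lambda>t. exp (- \<nu> * t)) has_integral 1 / \<nu>) {0..}"
      using has_integral_exp_minus_to_infinity[OF nu, of 0] by simp
    have B0: "Bint \<nu> x \<ge> 0" unfolding Bint_def
      by (rule integral_nonneg) (use iB in auto)
    have "Bint \<nu> x \<le> integral {0..} (\<lambda>t. exp (- \<nu> * t))" unfolding Bint_def
    proof (rule integral_le)
      show "(\<lambda>t. exp (- x * cosh t) * exp (- \<nu> * t)) integrable_on {0..}" using iB by simp
      show "(\<lambda>t. exp (- \<nu> * t)) integrable_on {0..}" using hE by (rule has_integral_integrable)
      show "exp (- x * cosh t) * exp (- \<nu> * t) \<le> exp (- \<nu> * t)" if "t \<in> {0..}" for t
        using x by (intro mult_left_le_one_le) (auto intro: order_trans[OF _ cosh_real_ge_1])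
    qed
    also have "\<dots> = 1 / \<nu>" using hE by (rule integral_unique)
    finally have "Bint \<nu> x \<le> 1 / \<nu>" .
    then have "(x/2) powr \<nu> * Bint \<nu> x \<le> (x/2) powr \<nu> * (1 / \<nu>)" by (intro mult_left_mono) auto
    then show ?thesis using B0 by simp
  qed
  have l: "((\<lambda>x. (x/2) powr \<nu> / \<nu>) \<longlongrightarrow> 0) (at_right 0)"
    using nu by real_asymp
  show ?thesis
    by (rule Lim_null_comparison[OF _ l], rule eventually_at_rightI[of 0 1], rule bnd) auto
qed

lemma besselK_asym:
  assumes nu: "\<nu> > 0"
  shows "((\<lambda>x. of_real ((x/2) powr \<nu>) * besselK \<nu> (of_real x)) \<longlongrightarrow> of_real (Gamma \<nu> / 2)) (at_right 0)"
proof -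
  have l0: "((\<lambda>x. of_real (((x/2) powr \<nu> * Aint \<nu> x + (x/2) powr \<nu> * Bint \<nu> x) / 2) :: complex) \<longlongrightarrow> of_real ((Gamma \<nu> + 0) / 2)) (at_right 0)"
    by (intro tendsto_intros Phi_lim B_small nu) simp
  then have l: "((\<lambda>x. of_real (((x/2) powr \<nu> * Aint \<nu> x + (x/2) powr \<nu> * Bint \<nu> x) / 2) :: complex) \<longlongrightarrow> of_real (Gamma \<nu> / 2)) (at_right 0)"
    by simp
  have ev: "\<forall>\<^sub>F x in at_right 0. of_real (((x/2) powr \<nu> * Aint \<nu> x + (x/2) powr \<nu> * Bint \<nu> x) / 2) = of_real ((x/2) powr \<nu>) * besselK \<nu> (of_real x)"
    by (rule eventually_at_rightI[of 0 1]) (auto simp: besselK_real field_simps)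
  show ?thesis by (rule Lim_transform_eventually[OF l ev])
qed

lemma besselK_even: "besselK (- \<nu>) w = besselK \<nu> w"
  unfolding besselK_def by simp

definition Dfn :: "real \<Rightarrow> complex \<Rightarrow> complex" where
  "Dfn \<nu> w = of_real (sin (\<nu> * pi)) * besselK \<nu> w - of_real (pi / 2) * (Ifn (- \<nu>) w - Ifn \<nu> w)"

lemma Dfn_odd: "Dfn (- \<nu>) w = - Dfn \<nu> w"
  unfolding Dfn_def besselK_even by (simp add: algebra_simps)

lemma alg_D: "w \<noteq> 0 \<Longrightarrow>
   (s::complex) * (- Km - n / w * K) - p * ((Ip - n / w * Jm) - (Jmm - n / w * J))
   = (- s) * Km - p * (Ip - Jmm) - n / w * (s * K - p * (Jm - J))"
  by (simp add: algebra_simps)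

lemma Dfn_deriv:
  assumes w: "Re w > 0"
  shows "(Dfn \<nu> has_field_derivative Dfn (\<nu> - 1) w - of_real \<nu> / w * Dfn \<nu> w) (at w)"
proof -
  have w0: "w \<noteq> 0" using w by auto
  have dK: "((\<lambda>w. besselK \<nu> w) has_field_derivative (- besselK (\<nu> - 1) w - of_real \<nu> / w * besselK \<nu> w)) (at w)"
    by (rule besselK_deriv_minus[OF w])
  have dIm: "(Ifn (- \<nu>) has_field_derivative (Ifn (- \<nu> + 1) w - of_real \<nu> / w * Ifn (- \<nu>) w)) (at w)"
    using Ifn_deriv_plus[OF w, of "- \<nu>"] by simp
  have dI: "(Ifn \<nu> has_field_derivative (Ifn (\<nu> - 1) w - of_real \<nu> / w * Ifn \<nu> w)) (at w)"
    by (rule Ifn_deriv_minus[OF w])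
  have d: "(Dfn \<nu> has_field_derivative
      of_real (sin (\<nu> * pi)) * (- besselK (\<nu> - 1) w - of_real \<nu> / w * besselK \<nu> w)
      - of_real (pi / 2) * ((Ifn (- \<nu> + 1) w - of_real \<nu> / w * Ifn (- \<nu>) w) - (Ifn (\<nu> - 1) w - of_real \<nu> / w * Ifn \<nu> w))) (at w)"
    unfolding Dfn_def[abs_def] by (intro DERIV_diff DERIV_cmult dK dIm dI)
  have s: "sin ((\<nu> - 1) * pi) = - sin (\<nu> * pi)"
    by (simp add: left_diff_distrib sin_diff)
  have e: "- (\<nu> - 1) = - \<nu> + 1" by simp
  have "of_real (sin (\<nu> * pi)) * (- besselK (\<nu> - 1) w - of_real \<nu> / w * besselK \<nu> w)
      - of_real (pi / 2) * ((Ifn (- \<nu> + 1) w - of_real \<nu> / w * Ifn (- \<nu>) w) - (Ifn (\<nu> - 1) w - of_real \<nu> / w * Ifn \<nu> w))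
      = Dfn (\<nu> - 1) w - of_real \<nu> / w * Dfn \<nu> w"
    unfolding Dfn_def s e of_real_minus by (rule alg_D[OF w0])
  with d show ?thesis by simp
qed

lemma Dfn_deriv_plus:
  assumes w: "Re w > 0"
  shows "(Dfn \<nu> has_field_derivative Dfn (\<nu> + 1) w + of_real \<nu> / w * Dfn \<nu> w) (at w)"
proof -
  have h: "Dfn (- \<nu>) = (\<lambda>w. - Dfn \<nu> w)" by (rule ext) (rule Dfn_odd)
  have e: "- \<nu> - 1 = - (\<nu> + 1)" by simp
  have "(Dfn (- \<nu>) has_field_derivative Dfn (- \<nu> - 1) w - of_real (- \<nu>) / w * Dfn (- \<nu>) w) (at w)"
    by (rule Dfn_deriv[OF w])
  then have "((\<lambda>w. - Dfn \<nu> w) has_field_derivative - (Dfn (\<nu> + 1) w + of_real \<nu> / w * Dfn \<nu> w)) (at w)"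
    unfolding h e Dfn_odd by (simp add: algebra_simps)
  from DERIV_minus[OF this] show ?thesis by (simp add: ac_simps)
qed

lemma alg_W: "w \<noteq> 0 \<Longrightarrow>
  w * ((u1 * (u2 + (m - 1) / w * v2) + (v1 - m / w * u1) * v2) - (v1 * (v2 - m / w * u2) + (u1 + (m - 1) / w * v1) * u2))
   + 1 * (u1 * v2 - v1 * u2) = (0::complex)"
  by (simp add: field_simps)

lemma wronsk_const:
  fixes u1 v1 u2 v2 :: "complex \<Rightarrow> complex"
  assumes du1: "\<And>w. Re w > 0 \<Longrightarrow> (u1 has_field_derivative v1 w - of_real \<mu> / w * u1 w) (at w)"
      and dv1: "\<And>w. Re w > 0 \<Longrightarrow> (v1 has_field_derivative u1 w + of_real (\<mu> - 1) / w * v1 w) (at w)"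
      and du2: "\<And>w. Re w > 0 \<Longrightarrow> (u2 has_field_derivative v2 w - of_real \<mu> / w * u2 w) (at w)"
      and dv2: "\<And>w. Re w > 0 \<Longrightarrow> (v2 has_field_derivative u2 w + of_real (\<mu> - 1) / w * v2 w) (at w)"
  shows "\<exists>c. \<forall>w\<in>{w. Re w > 0}. w * (u1 w * v2 w - v1 w * u2 w) = c"
proof (rule has_field_derivative_zero_constant)
  show "convex {w. Re w > 0}" by (simp add: convex_halfspace_Re_gt)
  fix w assume "w \<in> {w. Re w > 0}"
  then have w: "Re w > 0" by simp
  have w0: "w \<noteq> 0" using w by auto
  note d = DERIV_mult'[OF DERIV_ident DERIV_diff[OF DERIV_mult'[OF du1[OF w] dv2[OF w]] DERIV_mult'[OF dv1[OF w] du2[OF w]]]]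
  have z: "w * ((u1 w * (u2 w + of_real (\<mu> - 1) / w * v2 w) + (v1 w - of_real \<mu> / w * u1 w) * v2 w) - (v1 w * (v2 w - of_real \<mu> / w * u2 w) + (u1 w + of_real (\<mu> - 1) / w * v1 w) * u2 w))
   + 1 * (u1 w * v2 w - v1 w * u2 w) = 0"
    using alg_W[OF w0, of "u1 w" "u2 w" "of_real \<mu>" "v2 w" "v1 w"] by simp
  show "((\<lambda>w. w * (u1 w * v2 w - v1 w * u2 w)) has_field_derivative 0) (at w within {w. Re w > 0})"
    using d unfolding z by (simp add: has_field_derivative_at_within)
qed

definition Tf :: "real \<Rightarrow> real \<Rightarrow> complex" where
  "Tf \<nu> x = Pc (of_real \<nu>) (of_real ((x/2)^2))"
definition Gf :: "real \<Rightarrow> real \<Rightarrow> complex" where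
  "Gf \<nu> x = of_real ((x/2) powr \<nu>) * besselK \<nu> (of_real x)"

lemma Tf_lim: "(Tf \<nu> \<longlongrightarrow> rGamma (of_real \<nu> + 1)) (at_right 0)"
proof -
  have c: "isCont (Pc (of_real \<nu>)) 0"
    using continuous_Pc[of UNIV] by (simp add: continuous_on_eq_continuous_at)
  have l: "((\<lambda>x::real. (of_real ((x/2)^2) :: complex)) \<longlongrightarrow> 0) (at_right 0)"
    by (rule tendsto_eq_intros) (real_asymp, simp)
  show ?thesis unfolding Tf_def Pc_0[symmetric]
    using isCont_tendsto_compose[OF c l] .
qed

lemma Gf_lim: "\<nu> > 0 \<Longrightarrow> (Gf \<nu> \<longlongrightarrow> of_real (Gamma \<nu> / 2)) (at_right 0)"
  unfolding Gf_def[abs_def] by (rule besselK_asym)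

lemma Ifn_real_form:
  assumes "x > 0"
  shows "Ifn \<nu> (of_real x) = of_real ((x/2) powr \<nu>) * Tf \<nu> x"
proof -
  have "(of_real x / 2 :: complex) = of_real (x / 2)" by simp
  moreover have "(of_real (x/2) :: complex) powr (of_real \<nu>) = of_real ((x/2) powr \<nu>)"
    by (rule powr_of_real) (use assms in simp)
  ultimately show ?thesis unfolding Ifn_def Tf_def by (simp add: power_divide)
qed

lemma K_real_form:
  assumes "x > 0"
  shows "besselK \<nu> (of_real x) = of_real ((x/2) powr (- \<nu>)) * Gf \<nu> x"
proof -
  have "(x/2) powr (- \<nu>) * (x/2) powr \<nu> = 1" using assms by (simp add: powr_add[symmetric])
  then have "(of_real ((x/2) powr (- \<nu>)) :: complex) * of_real ((x/2) powr \<nu>) = 1"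
    by (simp flip: of_real_mult)
  then show ?thesis unfolding Gf_def by (simp add: mult.assoc[symmetric])
qed

lemma xpow: "(x::real) > 0 \<Longrightarrow> x * ((x/2) powr a * (x/2) powr b) = 2 * (x/2) powr (a + b + 1)"
proof -
  assume x: "x > 0"
  have "(x/2) powr (a + b + 1) = (x/2) powr a * (x/2) powr b * (x/2)" using x by (simp add: powr_add)
  then show ?thesis by (simp add: ac_simps)
qed

lemma prod_lim_gen:
  assumes F: "(F \<longlongrightarrow> A) (at_right 0)" and G: "(G \<longlongrightarrow> B) (at_right 0)"
    and P: "((\<lambda>x. of_real (2 * (x/2) powr (a + b + 1)) :: complex) \<longlongrightarrow> C) (at_right 0)"
  shows "((\<lambda>x. of_real x * ((of_real ((x/2) powr a) * F x) * (of_real ((x/2) powr b) * G x))) \<longlongrightarrow> C * (A * B)) (at_right 0)"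
proof -
  have l: "((\<lambda>x. of_real (2 * (x/2) powr (a + b + 1)) * (F x * G x)) \<longlongrightarrow> C * (A * B)) (at_right 0)"
    by (intro tendsto_mult P F G)
  have ev: "\<forall>\<^sub>F x in at_right 0. of_real (2 * (x/2) powr (a + b + 1)) * (F x * G x)
     = of_real x * ((of_real ((x/2) powr a) * F x) * (of_real ((x/2) powr b) * G x))"
  proof (rule eventually_at_rightI[of 0 1])
    fix x :: real assume "x \<in> {0<..<1}"
    then have x: "x > 0" by simp
    have "(of_real (2 * (x/2) powr (a + b + 1)) :: complex) = of_real x * (of_real ((x/2) powr a) * of_real ((x/2) powr b))"
      unfolding xpow[OF x, symmetric] by simp
    then show "of_real (2 * (x/2) powr (a + b + 1)) * (F x * G x)
     = of_real x * ((of_real ((x/2) powr a) * F x) * (of_real ((x/2) powr b) * G x))"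
      by (simp add: ac_simps)
  qed simp
  show ?thesis by (rule Lim_transform_eventually[OF l ev])
qed

lemma pow_lim_0: "a + b + 1 = 0 \<Longrightarrow> ((\<lambda>x. of_real (2 * (x/2) powr (a + b + 1)) :: complex) \<longlongrightarrow> 2) (at_right 0)"
proof -
  assume e: "a + b + 1 = 0"
  have "((\<lambda>x::real. of_real 2 :: complex) \<longlongrightarrow> 2) (at_right 0)" by simp
  then show ?thesis
  proof (rule Lim_transform_eventually)
    show "\<forall>\<^sub>F x in at_right 0. (of_real 2 :: complex) = of_real (2 * (x/2) powr (a + b + 1))"
      by (rule eventually_at_rightI[of 0 1]) (auto simp: e)
  qed
qed

lemma pow_lim_pos: "a + b + 1 > 0 \<Longrightarrow> ((\<lambda>x. of_real (2 * (x/2) powr (a + b + 1)) :: complex) \<longlongrightarrow> 0) (at_right 0)"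
proof -
  assume e: "a + b + 1 > 0"
  have "((\<lambda>x::real. 2 * (x/2) powr (a + b + 1)) \<longlongrightarrow> 0) (at_right 0)"
    using e by real_asymp
  then have "((\<lambda>x::real. of_real (2 * (x/2) powr (a + b + 1)) :: complex) \<longlongrightarrow> of_real 0) (at_right 0)"
    by (rule tendsto_of_real)
  then show ?thesis by simp
qed

lemma IIlim:
  assumes P: "((\<lambda>x. of_real (2 * (x/2) powr (a + b + 1)) :: complex) \<longlongrightarrow> C) (at_right 0)"
  shows "((\<lambda>x. of_real x * (Ifn a (of_real x) * Ifn b (of_real x))) \<longlongrightarrow> C * (rGamma (of_real a + 1) * rGamma (of_real b + 1))) (at_right 0)"
proof -
  note l = prod_lim_gen[OF Tf_lim Tf_lim P]
  have ev: "\<forall>\<^sub>F x in at_right 0. of_real x * ((of_real ((x/2) powr a) * Tf a x) * (of_real ((x/2) powr b) * Tf b x))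
     = of_real x * (Ifn a (of_real x) * Ifn b (of_real x))"
    by (rule eventually_at_rightI[of 0 1]) (auto simp: Ifn_real_form)
  show ?thesis by (rule Lim_transform_eventually[OF l ev])
qed

lemma KIlim:
  assumes a: "a > 0"
  assumes P: "((\<lambda>x. of_real (2 * (x/2) powr ((- a) + b + 1)) :: complex) \<longlongrightarrow> C) (at_right 0)"
  shows "((\<lambda>x. of_real x * (besselK a (of_real x) * Ifn b (of_real x))) \<longlongrightarrow> C * (of_real (Gamma a / 2) * rGamma (of_real b + 1))) (at_right 0)"
proof -
  note l = prod_lim_gen[OF Gf_lim[OF a] Tf_lim P]
  have ev: "\<forall>\<^sub>F x in at_right 0. of_real x * ((of_real ((x/2) powr (- a)) * Gf a x) * (of_real ((x/2) powr b) * Tf b x))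
     = of_real x * (besselK a (of_real x) * Ifn b (of_real x))"
    by (rule eventually_at_rightI[of 0 1]) (auto simp: Ifn_real_form K_real_form)
  show ?thesis by (rule Lim_transform_eventually[OF l ev])
qed

lemma const_lim:
  fixes f :: "complex \<Rightarrow> complex"
  assumes "\<And>w. Re w > 0 \<Longrightarrow> f w = c" and "((\<lambda>x. f (of_real x)) \<longlongrightarrow> L) (at_right 0)"
  shows "c = L"
proof -
  have lc: "((\<lambda>x. f (of_real x)) \<longlongrightarrow> c) (at_right (0::real))"
  proof (rule Lim_transform_eventually[OF tendsto_const])
    show "\<forall>\<^sub>F x in at_right 0. c = f (of_real x)"
      by (rule eventually_at_rightI[of 0 1]) (auto simp: assms(1))
  qed
  show ?thesis using tendsto_unique[of "at_right (0::real)" "\<lambda>x. f (of_real x)" c L] lc assms(2) by simp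
qed

lemma algD': "(s * K1 - p * (a2 - a1)) * b1 - (- s * K2 - p * (b2 - b1)) * a1 = s * (K1 * b1 + K2 * a1) + p * (a1 * b2 - b1 * (a2::complex))"
  by (simp add: algebra_simps)

lemma algD2: "(s * K1 - p * (a2 - a1)) * b2 - (- s * K2 - p * (b2 - b1)) * a2 = s * (K1 * b2 + K2 * a2) + p * (a1 * b2 - b1 * (a2::complex))"
  by (simp add: algebra_simps)

lemma Dfn_m1: "Dfn (\<mu> - 1) w = - of_real (sin (\<mu> * pi)) * besselK (1 - \<mu>) w - of_real (pi / 2) * (Ifn (1 - \<mu>) w - Ifn (\<mu> - 1) w)"
proof -
  have s: "sin ((\<mu> - 1) * pi) = - sin (\<mu> * pi)"
    by (simp add: left_diff_distrib sin_diff)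
  have k: "besselK (\<mu> - 1) w = besselK (1 - \<mu>) w"
    using besselK_even[of "1 - \<mu>" w] by simp
  have e: "- (\<mu> - 1) = 1 - \<mu>" by simp
  show ?thesis unfolding Dfn_def s k e by simp
qed

lemma Gamma_rGamma_real: "\<mu> > 0 \<Longrightarrow> of_real (Gamma \<mu>) * rGamma (of_real \<mu> :: complex) = 1"
proof -
  assume m: "\<mu> > 0"
  have "Gamma \<mu> * rGamma \<mu> = 1" using Gamma_real_pos[OF m] by (simp add: rGamma_inverse_Gamma)
  then show ?thesis by (simp add: rGamma_complex_of_real flip: of_real_mult)
qed

lemma D_zero_01:
  assumes m0: "0 < \<mu>" and m1: "\<mu> < 1" and w: "Re w > 0"
  shows "Dfn \<mu> w = 0"
proof -
  define s where "s = (of_real (sin (\<mu> * pi)) :: complex)"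
  define p where "p = (of_real (pi / 2) :: complex)"
  have du1: "\<And>w. Re w > 0 \<Longrightarrow> (Dfn \<mu> has_field_derivative Dfn (\<mu> - 1) w - of_real \<mu> / w * Dfn \<mu> w) (at w)"
    by (rule Dfn_deriv)
  have dv1: "\<And>w. Re w > 0 \<Longrightarrow> (Dfn (\<mu> - 1) has_field_derivative Dfn \<mu> w + of_real (\<mu> - 1) / w * Dfn (\<mu> - 1) w) (at w)"
    using Dfn_deriv_plus[of _ "\<mu> - 1"] by simp
  have da1: "\<And>w. Re w > 0 \<Longrightarrow> (Ifn \<mu> has_field_derivative Ifn (\<mu> - 1) w - of_real \<mu> / w * Ifn \<mu> w) (at w)"
    by (rule Ifn_deriv_minus)
  have db1: "\<And>w. Re w > 0 \<Longrightarrow> (Ifn (\<mu> - 1) has_field_derivative Ifn \<mu> w + of_real (\<mu> - 1) / w * Ifn (\<mu> - 1) w) (at w)"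
    using Ifn_deriv_plus[of _ "\<mu> - 1"] by simp
  have da2: "(Ifn (- \<mu>) has_field_derivative Ifn (1 - \<mu>) w - of_real \<mu> / w * Ifn (- \<mu>) w) (at w)" if "Re w > 0" for w
  proof -
    have e: "Ifn (- \<mu> + 1) w + of_real (- \<mu>) / w * Ifn (- \<mu>) w = Ifn (1 - \<mu>) w - of_real \<mu> / w * Ifn (- \<mu>) w"
      by (simp add: algebra_simps)
    show ?thesis using Ifn_deriv_plus[OF that, of "- \<mu>"] unfolding e .
  qed
  have db2: "(Ifn (1 - \<mu>) has_field_derivative Ifn (- \<mu>) w + of_real (\<mu> - 1) / w * Ifn (1 - \<mu>) w) (at w)" if "Re w > 0" for w
  proof -
    have o: "(of_real (1 - \<mu>) :: complex) = - of_real (\<mu> - 1)" by simp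
    have e: "Ifn (1 - \<mu> - 1) w - of_real (1 - \<mu>) / w * Ifn (1 - \<mu>) w = Ifn (- \<mu>) w + of_real (\<mu> - 1) / w * Ifn (1 - \<mu>) w"
      unfolding o by (simp only: minus_divide_left[symmetric] mult_minus_left diff_minus_eq_add diff_diff_eq2 add_diff_cancel_left') simp
    show ?thesis using Ifn_deriv_minus[OF that, of "1 - \<mu>"] unfolding e .
  qed
  obtain c1 where c1: "\<And>w. Re w > 0 \<Longrightarrow> w * (Dfn \<mu> w * Ifn (\<mu> - 1) w - Dfn (\<mu> - 1) w * Ifn \<mu> w) = c1"
    using wronsk_const[OF du1 dv1 da1 db1] by auto
  obtain c2 where c2: "\<And>w. Re w > 0 \<Longrightarrow> w * (Dfn \<mu> w * Ifn (1 - \<mu>) w - Dfn (\<mu> - 1) w * Ifn (- \<mu>) w) = c2"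
    using wronsk_const[OF du1 dv1 da2 db2] by auto
  obtain c3 where c3: "\<And>w. Re w > 0 \<Longrightarrow> w * (Ifn \<mu> w * Ifn (1 - \<mu>) w - Ifn (\<mu> - 1) w * Ifn (- \<mu>) w) = c3"
    using wronsk_const[OF da1 db1 da2 db2] by auto
  have id1: "Dfn \<mu> w * Ifn (\<mu> - 1) w - Dfn (\<mu> - 1) w * Ifn \<mu> w
     = s * (besselK \<mu> w * Ifn (\<mu> - 1) w + besselK (1 - \<mu>) w * Ifn \<mu> w)
       + p * (Ifn \<mu> w * Ifn (1 - \<mu>) w - Ifn (\<mu> - 1) w * Ifn (- \<mu>) w)" for w
    unfolding Dfn_m1 unfolding Dfn_def s_def[symmetric] p_def[symmetric] by (rule algD')
  have id2: "Dfn \<mu> w * Ifn (1 - \<mu>) w - Dfn (\<mu> - 1) w * Ifn (- \<mu>) w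
     = s * (besselK \<mu> w * Ifn (1 - \<mu>) w + besselK (1 - \<mu>) w * Ifn (- \<mu>) w)
       + p * (Ifn \<mu> w * Ifn (1 - \<mu>) w - Ifn (\<mu> - 1) w * Ifn (- \<mu>) w)" for w
    unfolding Dfn_m1 unfolding Dfn_def s_def[symmetric] p_def[symmetric] by (rule algD2)
  define g1 where "g1 = rGamma (of_real \<mu> :: complex)"
  define g2 where "g2 = rGamma (1 - of_real \<mu> :: complex)"
  have L_II1: "((\<lambda>x. of_real x * (Ifn \<mu> (of_real x) * Ifn (1 - \<mu>) (of_real x))) \<longlongrightarrow> 0 * (rGamma (of_real \<mu> + 1) * rGamma (of_real (1 - \<mu>) + 1))) (at_right 0)"
    by (rule IIlim, rule pow_lim_pos) simp
  have L_II2: "((\<lambda>x. of_real x * (Ifn (\<mu> - 1) (of_real x) * Ifn (- \<mu>) (of_real x))) \<longlongrightarrow> 2 * (g1 * g2)) (at_right 0)"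
  proof -
    have "((\<lambda>x. of_real x * (Ifn (\<mu> - 1) (of_real x) * Ifn (- \<mu>) (of_real x))) \<longlongrightarrow> 2 * (rGamma (of_real (\<mu> - 1) + 1) * rGamma (of_real (- \<mu>) + 1))) (at_right 0)"
      by (rule IIlim, rule pow_lim_0) simp
    then show ?thesis unfolding g1_def g2_def by simp
  qed
  have L_KI1: "((\<lambda>x. of_real x * (besselK \<mu> (of_real x) * Ifn (\<mu> - 1) (of_real x))) \<longlongrightarrow> 2 * (of_real (Gamma \<mu> / 2) * g1)) (at_right 0)"
  proof -
    have "((\<lambda>x. of_real x * (besselK \<mu> (of_real x) * Ifn (\<mu> - 1) (of_real x))) \<longlongrightarrow> 2 * (of_real (Gamma \<mu> / 2) * rGamma (of_real (\<mu> - 1) + 1))) (at_right 0)"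
      by (rule KIlim[OF m0], rule pow_lim_0) simp
    then show ?thesis unfolding g1_def by simp
  qed
  have L_KI2: "((\<lambda>x. of_real x * (besselK (1 - \<mu>) (of_real x) * Ifn \<mu> (of_real x))) \<longlongrightarrow> 0 * (of_real (Gamma (1 - \<mu>) / 2) * rGamma (of_real \<mu> + 1))) (at_right 0)"
    by (rule KIlim, simp add: m1, rule pow_lim_pos) (simp add: m0)
  have L_KI3: "((\<lambda>x. of_real x * (besselK \<mu> (of_real x) * Ifn (1 - \<mu>) (of_real x))) \<longlongrightarrow> 0 * (of_real (Gamma \<mu> / 2) * rGamma (of_real (1 - \<mu>) + 1))) (at_right 0)"
    by (rule KIlim[OF m0], rule pow_lim_pos) (simp add: m1)
  have L_KI4: "((\<lambda>x. of_real x * (besselK (1 - \<mu>) (of_real x) * Ifn (- \<mu>) (of_real x))) \<longlongrightarrow> 2 * (of_real (Gamma (1 - \<mu>) / 2) * g2)) (at_right 0)"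
  proof -
    have "((\<lambda>x. of_real x * (besselK (1 - \<mu>) (of_real x) * Ifn (- \<mu>) (of_real x))) \<longlongrightarrow> 2 * (of_real (Gamma (1 - \<mu>) / 2) * rGamma (of_real (- \<mu>) + 1))) (at_right 0)"
      by (rule KIlim, simp add: m1, rule pow_lim_0) simp
    then show ?thesis unfolding g2_def by simp
  qed
  have gg: "g1 * g2 = s / of_real pi"
    unfolding g1_def g2_def s_def using rGamma_reflection_complex[of "of_real \<mu>"]
    by (simp add: sin_of_real mult.commute flip: of_real_mult)
  have G1: "2 * (of_real (Gamma \<mu> / 2) * g1) = 1"
    unfolding g1_def using Gamma_rGamma_real[OF m0] by simp
  have G2: "2 * (of_real (Gamma (1 - \<mu>) / 2) * g2) = 1"
    unfolding g2_def using Gamma_rGamma_real[of "1 - \<mu>"] m1 by simp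
  have spi: "p * (2 * (s / of_real pi)) = s" unfolding p_def by simp
  have C3: "c3 = 0 - 2 * (g1 * g2)"
  proof (rule const_lim[where f = "\<lambda>w. w * (Ifn \<mu> w * Ifn (1 - \<mu>) w - Ifn (\<mu> - 1) w * Ifn (- \<mu>) w)"])
    show "\<And>w. Re w > 0 \<Longrightarrow> w * (Ifn \<mu> w * Ifn (1 - \<mu>) w - Ifn (\<mu> - 1) w * Ifn (- \<mu>) w) = c3" by (rule c3)
    have "((\<lambda>x. of_real x * (Ifn \<mu> (of_real x) * Ifn (1 - \<mu>) (of_real x)) - of_real x * (Ifn (\<mu> - 1) (of_real x) * Ifn (- \<mu>) (of_real x)))
       \<longlongrightarrow> 0 * (rGamma (of_real \<mu> + 1) * rGamma (of_real (1 - \<mu>) + 1)) - 2 * (g1 * g2)) (at_right 0)"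
      by (intro tendsto_diff L_II1 L_II2)
    then show "((\<lambda>x. of_real x * (Ifn \<mu> (of_real x) * Ifn (1 - \<mu>) (of_real x) - Ifn (\<mu> - 1) (of_real x) * Ifn (- \<mu>) (of_real x))) \<longlongrightarrow> 0 - 2 * (g1 * g2)) (at_right 0)"
      by (simp add: right_diff_distrib)
  qed
  have C1: "c1 = 0"
  proof -
    have "c1 = s * (2 * (of_real (Gamma \<mu> / 2) * g1) + 0 * (of_real (Gamma (1 - \<mu>) / 2) * rGamma (of_real \<mu> + 1)))
             + p * (0 * (rGamma (of_real \<mu> + 1) * rGamma (of_real (1 - \<mu>) + 1)) - 2 * (g1 * g2))"
    proof (rule const_lim[where f = "\<lambda>w. w * (Dfn \<mu> w * Ifn (\<mu> - 1) w - Dfn (\<mu> - 1) w * Ifn \<mu> w)"])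
      show "\<And>w. Re w > 0 \<Longrightarrow> w * (Dfn \<mu> w * Ifn (\<mu> - 1) w - Dfn (\<mu> - 1) w * Ifn \<mu> w) = c1" by (rule c1)
      have "((\<lambda>x. s * (of_real x * (besselK \<mu> (of_real x) * Ifn (\<mu> - 1) (of_real x)) + of_real x * (besselK (1 - \<mu>) (of_real x) * Ifn \<mu> (of_real x)))
           + p * (of_real x * (Ifn \<mu> (of_real x) * Ifn (1 - \<mu>) (of_real x)) - of_real x * (Ifn (\<mu> - 1) (of_real x) * Ifn (- \<mu>) (of_real x))))
         \<longlongrightarrow> s * (2 * (of_real (Gamma \<mu> / 2) * g1) + 0 * (of_real (Gamma (1 - \<mu>) / 2) * rGamma (of_real \<mu> + 1)))
             + p * (0 * (rGamma (of_real \<mu> + 1) * rGamma (of_real (1 - \<mu>) + 1)) - 2 * (g1 * g2))) (at_right 0)"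
        by (intro tendsto_intros L_KI1 L_KI2 L_II1 L_II2)
      then show "((\<lambda>x. of_real x * (Dfn \<mu> (of_real x) * Ifn (\<mu> - 1) (of_real x) - Dfn (\<mu> - 1) (of_real x) * Ifn \<mu> (of_real x)))
         \<longlongrightarrow> s * (2 * (of_real (Gamma \<mu> / 2) * g1) + 0 * (of_real (Gamma (1 - \<mu>) / 2) * rGamma (of_real \<mu> + 1)))
             + p * (0 * (rGamma (of_real \<mu> + 1) * rGamma (of_real (1 - \<mu>) + 1)) - 2 * (g1 * g2))) (at_right 0)"
        unfolding id1 by (simp add: algebra_simps)
    qed
    also have "\<dots> = s - p * (2 * (s / of_real pi))" unfolding G1 gg by simp
    also have "\<dots> = 0" unfolding spi by simp
    finally show ?thesis .
  qed
  have C2: "c2 = 0"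
  proof -
    have "c2 = s * (0 * (of_real (Gamma \<mu> / 2) * rGamma (of_real (1 - \<mu>) + 1)) + 2 * (of_real (Gamma (1 - \<mu>) / 2) * g2))
             + p * (0 * (rGamma (of_real \<mu> + 1) * rGamma (of_real (1 - \<mu>) + 1)) - 2 * (g1 * g2))"
    proof (rule const_lim[where f = "\<lambda>w. w * (Dfn \<mu> w * Ifn (1 - \<mu>) w - Dfn (\<mu> - 1) w * Ifn (- \<mu>) w)"])
      show "\<And>w. Re w > 0 \<Longrightarrow> w * (Dfn \<mu> w * Ifn (1 - \<mu>) w - Dfn (\<mu> - 1) w * Ifn (- \<mu>) w) = c2" by (rule c2)
      have "((\<lambda>x. s * (of_real x * (besselK \<mu> (of_real x) * Ifn (1 - \<mu>) (of_real x)) + of_real x * (besselK (1 - \<mu>) (of_real x) * Ifn (- \<mu>) (of_real x)))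
           + p * (of_real x * (Ifn \<mu> (of_real x) * Ifn (1 - \<mu>) (of_real x)) - of_real x * (Ifn (\<mu> - 1) (of_real x) * Ifn (- \<mu>) (of_real x))))
         \<longlongrightarrow> s * (0 * (of_real (Gamma \<mu> / 2) * rGamma (of_real (1 - \<mu>) + 1)) + 2 * (of_real (Gamma (1 - \<mu>) / 2) * g2))
             + p * (0 * (rGamma (of_real \<mu> + 1) * rGamma (of_real (1 - \<mu>) + 1)) - 2 * (g1 * g2))) (at_right 0)"
        by (intro tendsto_intros L_KI3 L_KI4 L_II1 L_II2)
      then show "((\<lambda>x. of_real x * (Dfn \<mu> (of_real x) * Ifn (1 - \<mu>) (of_real x) - Dfn (\<mu> - 1) (of_real x) * Ifn (- \<mu>) (of_real x)))
         \<longlongrightarrow> s * (0 * (of_real (Gamma \<mu> / 2) * rGamma (of_real (1 - \<mu>) + 1)) + 2 * (of_real (Gamma (1 - \<mu>) / 2) * g2))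
             + p * (0 * (rGamma (of_real \<mu> + 1) * rGamma (of_real (1 - \<mu>) + 1)) - 2 * (g1 * g2))) (at_right 0)"
        unfolding id2 by (simp add: algebra_simps)
    qed
    also have "\<dots> = s - p * (2 * (s / of_real pi))" unfolding G2 gg by simp
    also have "\<dots> = 0" unfolding spi by simp
    finally show ?thesis .
  qed
  have w0: "w \<noteq> 0" using w by auto
  have s0: "s \<noteq> 0"
  proof -
    have "sin (\<mu> * pi) > 0" using m0 m1 by (intro sin_gt_zero) auto
    then show ?thesis unfolding s_def by simp
  qed
  have c3nz: "c3 \<noteq> 0" unfolding C3 gg using s0 by simp
  have e1: "Dfn \<mu> w * Ifn (\<mu> - 1) w - Dfn (\<mu> - 1) w * Ifn \<mu> w = 0" using c1[OF w] C1 w0 by simp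
  have e2: "Dfn \<mu> w * Ifn (1 - \<mu>) w - Dfn (\<mu> - 1) w * Ifn (- \<mu>) w = 0" using c2[OF w] C2 w0 by simp
  have e3: "Ifn \<mu> w * Ifn (1 - \<mu>) w - Ifn (\<mu> - 1) w * Ifn (- \<mu>) w \<noteq> 0" using c3[OF w] c3nz by auto
  have "Dfn \<mu> w * (Ifn \<mu> w * Ifn (1 - \<mu>) w - Ifn (\<mu> - 1) w * Ifn (- \<mu>) w)
      = Ifn \<mu> w * (Dfn \<mu> w * Ifn (1 - \<mu>) w - Dfn (\<mu> - 1) w * Ifn (- \<mu>) w)
        - Ifn (- \<mu>) w * (Dfn \<mu> w * Ifn (\<mu> - 1) w - Dfn (\<mu> - 1) w * Ifn \<mu> w)"
    by (simp add: algebra_simps)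
  also have "\<dots> = 0" unfolding e1 e2 by simp
  finally show ?thesis using e3 by simp
qed

lemma norm_cosh_le: "norm (cosh (z::complex)) \<le> cosh (Re z)"
proof -
  have "norm (cosh z) = norm (exp z + exp (- z)) / 2" by (simp add: cosh_field_def norm_divide)
  also have "\<dots> \<le> (norm (exp z) + norm (exp (- z))) / 2"
    using norm_triangle_ineq[of "exp z" "exp (- z)"] by (simp add: divide_right_mono)
  also have "\<dots> = cosh (Re z)" by (simp add: cosh_field_def)
  finally show ?thesis .
qed

definition kc :: "complex \<Rightarrow> complex \<Rightarrow> real \<Rightarrow> complex" where
  "kc m w t = exp (- w * of_real (cosh t)) * cosh (m * of_real t)"

lemma kc_real: "kc (of_real \<mu>) w t = kint \<mu> w t"
  unfolding kc_def kint_def by (simp add: cosh_of_real flip: of_real_mult)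

lemma besselK_param_deriv:
  assumes w: "Re w > 0"
  shows "\<exists>K'. ((\<lambda>\<mu>. besselK \<mu> w) has_vector_derivative K') (at \<mu>0)"
proof -
  define f where "f n m = integral {0..real n} (kc m w)" for n m
  have cont: "continuous_on UNIV (kc m w)" for m unfolding kc_def by (intro continuous_intros)
  have hol: "f n holomorphic_on UNIV" for n
  proof -
    have "(\<lambda>m. integral (cbox 0 (real n)) (kc m w)) holomorphic_on UNIV"
    proof (rule leibniz_rule_holomorphic)
      show "((\<lambda>m. kc m w t) has_field_derivative exp (- w * of_real (cosh t)) * (sinh (m * of_real t) * of_real t)) (at m within UNIV)" for m t
        unfolding kc_def by (auto intro!: derivative_eq_intros)
      show "kc m w integrable_on cbox 0 (real n)" for m
        by (rule integrable_continuous) (rule continuous_on_subset[OF cont], simp)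
      show "continuous_on (UNIV \<times> cbox 0 (real n)) (\<lambda>(m, t). exp (- w * of_real (cosh t)) * (sinh (m * of_real t) * of_real t))"
        by (auto simp: case_prod_beta intro!: continuous_intros)
    qed simp
    then show ?thesis unfolding f_def cbox_interval .
  qed
  have hfd: "((f n) has_field_derivative deriv (f n) m) (at m)" for n m
    using holomorphic_derivI[OF hol open_UNIV] by blast
  define KC where "KC m = integral {0..} (kc m w)" for m
  have ul: "\<exists>d. 0 < d \<and> cball m0 d \<subseteq> UNIV \<and> uniform_limit (cball m0 d) f KC sequentially" for m0
  proof -
    define N where "N = \<bar>Re m0\<bar> + 1"
    obtain C where C: "\<And>t. t \<ge> 0 \<Longrightarrow> norm (kint N w t) \<le> C * exp (- t)"
      using kint_bound[OF w, of N] by auto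
    have C': "norm (kc m w t) \<le> C * exp (- t)" if "m \<in> cball m0 1" "t \<ge> 0" for m t
    proof -
      have "\<bar>Re m - Re m0\<bar> \<le> norm (m - m0)" using abs_Re_le_cmod[of "m - m0"] by simp
      also have "\<dots> \<le> 1" using that by (simp add: dist_norm norm_minus_commute)
      finally have "\<bar>Re m\<bar> \<le> N" unfolding N_def by linarith
      then have "\<bar>Re m * t\<bar> \<le> N * t" using that by (simp add: abs_mult mult_right_mono)
      then have ch: "cosh (Re m * t) \<le> cosh (N * t)"
        using cosh_real_nonneg_le_iff[of "\<bar>Re m * t\<bar>" "N * t"] that N_def by simp
      have n1: "norm (exp (- w * of_real (cosh t))) = exp (- Re w * cosh t)" by simp
      have n2: "norm (cosh (m * of_real t)) \<le> cosh (Re m * t)" using norm_cosh_le[of "m * of_real t"] by simp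
      have "norm (kc m w t) = exp (- Re w * cosh t) * norm (cosh (m * of_real t))"
        unfolding kc_def norm_mult n1 ..
      also have "\<dots> \<le> exp (- Re w * cosh t) * cosh (Re m * t)" by (rule mult_left_mono[OF n2]) simp
      finally have "norm (kc m w t) \<le> exp (- Re w * cosh t) * cosh (Re m * t)" .
      also have "\<dots> \<le> exp (- Re w * cosh t) * cosh (N * t)" using ch by (intro mult_left_mono) auto
      also have "\<dots> = norm (kint N w t)" by (simp add: norm_kint)
      also have "\<dots> \<le> C * exp (- t)" by (rule C[OF that(2)])
      finally show ?thesis .
    qed
    have "uniform_limit (cball m0 1) f KC sequentially"
    proof (rule uniform_limitI)
      fix e :: real assume e: "e > 0"
      have "(\<lambda>n. C * exp (- real n)) \<longlonglongrightarrow> C * 0"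
        by (intro tendsto_mult tendsto_const) real_asymp
      then have "eventually (\<lambda>n. C * exp (- real n) < e) sequentially"
        using e by (simp add: order_tendsto_iff)
      then show "eventually (\<lambda>n. \<forall>m\<in>cball m0 1. dist (f n m) (KC m) < e) sequentially"
      proof (rule eventually_mono)
        fix n assume n: "C * exp (- real n) < e"
        show "\<forall>m\<in>cball m0 1. dist (f n m) (KC m) < e"
        proof
          fix m assume m: "m \<in> cball m0 1"
          have "norm (KC m - f n m) \<le> C * exp (- real n)"
            unfolding f_def KC_def by (rule tail_bound[OF continuous_on_subset[OF cont] C'[OF m]]) auto
          then show "dist (f n m) (KC m) < e" using n by (simp add: dist_norm norm_minus_commute)
        qed
      qed
    qed
    then show ?thesis by (intro exI[of _ 1]) auto
  qed
  obtain g' where g': "\<And>m. (KC has_field_derivative g' m) (at m)"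
    using has_complex_derivative_uniform_sequence[OF open_UNIV hfd ul] by blast
  have "((\<lambda>\<mu>. KC (of_real \<mu>)) has_vector_derivative g' (of_real \<mu>0)) (at \<mu>0)"
    by (rule has_vector_derivative_real_field[OF g'])
  moreover have "KC (of_real \<mu>) = besselK \<mu> w" for \<mu>
    unfolding KC_def besselK_kint kc_real ..
  ultimately show ?thesis by auto
qed

lemma besselJ_param_deriv:
  assumes z: "z \<noteq> 0"
  shows "\<exists>J'. ((\<lambda>\<mu>. besselJ \<mu> z) has_vector_derivative J') (at \<mu>0)"
proof -
  define y where "y = - ((z / 2) ^ 2)"
  obtain P' where P': "\<And>m. ((\<lambda>m. Pc m y) has_field_derivative P' m) (at m)"
    using Pc_holo_param[of y] by blast
  have z2: "z / 2 \<noteq> 0" using z by simp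
  have "((\<lambda>m. (z / 2) powr m * Pc m y) has_field_derivative
          (Ln (z/2) * (z/2) powr (of_real \<mu>0)) * Pc (of_real \<mu>0) y + P' (of_real \<mu>0) * (z / 2) powr (of_real \<mu>0)) (at (of_real \<mu>0))"
    by (rule DERIV_mult[OF has_field_derivative_powr_right[OF z2] P'])
  from has_vector_derivative_real_field[OF this]
  have "((\<lambda>\<mu>. (z / 2) powr (of_real \<mu>) * Pc (of_real \<mu>) y) has_vector_derivative
          (Ln (z/2) * (z/2) powr (of_real \<mu>0)) * Pc (of_real \<mu>0) y + P' (of_real \<mu>0) * (z / 2) powr (of_real \<mu>0)) (at \<mu>0)" .
  moreover have "(\<lambda>\<mu>. (z / 2) powr (of_real \<mu>) * Pc (of_real \<mu>) y) = (\<lambda>\<mu>. besselJ \<mu> z)"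
    unfolding y_def besselJ_Pc ..
  ultimately show ?thesis by auto
qed

lemma D_zero_all:
  assumes w: "Re w > 0"
  shows "Dfn \<nu> w = 0"
proof -
  have base: "Dfn \<nu> w = 0" if "0 \<le> \<nu>" "\<nu> < 1" "Re w > 0" for \<nu> w
  proof (cases "\<nu> = 0")
    case True then show ?thesis unfolding Dfn_def by simp
  next
    case False then show ?thesis using D_zero_01[of \<nu> w] that by simp
  qed
  have step: "\<forall>w. Re w > 0 \<longrightarrow> Dfn (\<nu> - real n) w = 0" if "0 \<le> \<nu>" "\<nu> < 1" for \<nu> n
  proof (induction n)
    case 0 then show ?case using base[OF that] by simp
  next
    case (Suc n)
    show ?case
    proof (intro allI impI)
      fix w :: complex assume w: "Re w > 0"
      define a where "a = \<nu> - real n"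
      have oU: "open {w::complex. Re w > 0}" by (simp add: open_halfspace_Re_gt)
      have d: "(Dfn a has_field_derivative Dfn (a - 1) w - of_real a / w * Dfn a w) (at w)"
        by (rule Dfn_deriv[OF w])
      have "((\<lambda>w. 0) has_field_derivative Dfn (a - 1) w - of_real a / w * Dfn a w) (at w)"
        by (rule has_field_derivative_transform_within_open[OF d oU]) (use w Suc.IH in \<open>auto simp: a_def\<close>)
      moreover have "((\<lambda>w. 0) has_field_derivative 0) (at w)" by simp
      ultimately have "Dfn (a - 1) w - of_real a / w * Dfn a w = 0" using DERIV_unique by blast
      moreover have "Dfn a w = 0" using Suc.IH w unfolding a_def by blast
      ultimately have "Dfn (a - 1) w = 0" by simp
      then show "Dfn (\<nu> - real (Suc n)) w = 0" unfolding a_def by (simp add: algebra_simps)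
    qed
  qed
  have lt1: "Dfn \<nu> w = 0" if "\<nu> < 1" "Re w > 0" for \<nu> w
  proof -
    define n where "n = nat \<lceil>- \<nu>\<rceil>"
    define \<nu>0 where "\<nu>0 = \<nu> + real n"
    have "0 \<le> \<nu>0" "\<nu>0 < 1" unfolding \<nu>0_def n_def using that(1) by linarith+
    from step[OF this, of n] that(2) show ?thesis unfolding \<nu>0_def by simp
  qed
  show ?thesis
  proof (cases "\<nu> < 1")
    case True then show ?thesis using lt1 w by simp
  next
    case False
    then have "Dfn (- \<nu>) w = 0" using lt1 w by simp
    then show ?thesis using Dfn_odd[of \<nu> w] by simp
  qed
qed

lemma exp_minus_i_real: "exp (- \<i> * of_real \<theta>) = of_real (cos \<theta>) - \<i> * of_real (sin \<theta>)"
  by (simp add: exp_eq_polar complex_eq_iff)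

lemma val_alg: "(p::real) \<noteq> 0 \<Longrightarrow> - J' - of_real (2/p) * (E * ((- of_real s) * - K1 + of_real (co * p) * K0) + (\<i> * of_real p / 2) * E * ((- of_real s) * K0))
   = - (E * ((of_real co - \<i> * of_real s + of_real co) * K0 + of_real (2/p * s) * K1) + (J'::complex))"
  by (simp add: field_simps)

theorem mainTheorem2:
  fixes x \<nu> :: real
  assumes "x > 0" and "\<nu> > 0"
  shows "((\<lambda>\<mu>. ber \<mu> x) has_real_derivative
           - Re (exp (- \<i> * of_real (pi * \<nu> / 2)) *
                   ((exp (- \<i> * of_real (pi * \<nu>)) + of_real (cos (pi * \<nu>)))
                       * besselK \<nu> (exp (\<i> * of_real (pi / 4)) * of_real x)
                    + of_real (2 / pi * sin (pi * \<nu>))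
                       * besselK_dorder \<nu> (exp (\<i> * of_real (pi / 4)) * of_real x))
                 + besselJ_dorder \<nu> (exp (- \<i> * of_real (pi / 4)) * of_real x)))
          (at (- \<nu>))
       \<and> ((\<lambda>\<mu>. bei \<mu> x) has_real_derivative
           - Im (exp (- \<i> * of_real (pi * \<nu> / 2)) *
                   ((exp (- \<i> * of_real (pi * \<nu>)) + of_real (cos (pi * \<nu>)))
                       * besselK \<nu> (exp (\<i> * of_real (pi / 4)) * of_real x)
                    + of_real (2 / pi * sin (pi * \<nu>))
                       * besselK_dorder \<nu> (exp (\<i> * of_real (pi / 4)) * of_real x))
                 + besselJ_dorder \<nu> (exp (- \<i> * of_real (pi / 4)) * of_real x)))
          (at (- \<nu>))"
proof -
  note x = assms(1)
  define w0 where "w0 = exp (\<i> * of_real (pi / 4)) * of_real x"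
  define z1 where "z1 = exp (- \<i> * of_real (pi / 4)) * of_real x"
  define J where "J \<mu> = besselJ \<mu> z1" for \<mu>
  define K where "K \<mu> = besselK \<mu> w0" for \<mu>
  define E where "E \<mu> = exp (\<i> * of_real (pi * \<mu> / 2))" for \<mu>
  define S where "S \<mu> = (of_real (sin (\<mu> * pi)) :: complex)" for \<mu>
  define c where "c = (of_real (2 / pi) :: complex)"
  define g where "g \<mu> = exp (\<i> * of_real (pi * \<mu>)) * J \<mu>" for \<mu>
  have w0: "Re w0 > 0"
  proof -
    have "Re w0 = cos (pi / 4) * x" unfolding w0_def by (simp add: Re_exp)
    moreover have "cos (pi / 4) > 0" by (rule cos_gt_zero) (use pi_gt_zero in auto)
    ultimately show ?thesis using x by simp
  qed
  have z1: "z1 \<noteq> 0" unfolding z1_def using x by simp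
  have IJ: "Ifn \<mu> w0 = E \<mu> * J \<mu>" for \<mu>
    unfolding w0_def E_def J_def z1_def by (rule Ifn_besselJ[OF x])
  have rel: "S \<mu> * K \<mu> = of_real (pi / 2) * (E (- \<mu>) * J (- \<mu>) - E \<mu> * J \<mu>)" for \<mu>
    using D_zero_all[OF w0, of \<mu>] unfolding Dfn_def IJ S_def K_def by simp
  have EE: "E \<mu> * E (- \<mu>) = 1" for \<mu> unfolding E_def by (simp add: exp_add[symmetric])
  have EE2: "E \<mu> * E \<mu> = exp (\<i> * of_real (pi * \<mu>))" for \<mu> unfolding E_def by (simp add: exp_add[symmetric])
  have g_eq: "g = (\<lambda>\<mu>. J (- \<mu>) - c * (E \<mu> * (S \<mu> * K \<mu>)))"
  proof
    fix \<mu>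
    have "J (- \<mu>) - c * (E \<mu> * (S \<mu> * K \<mu>)) = J (- \<mu>) - (c * of_real (pi / 2)) * ((E \<mu> * E (- \<mu>)) * J (- \<mu>) - (E \<mu> * E \<mu>) * J \<mu>)"
      unfolding rel by (simp add: algebra_simps)
    also have "\<dots> = g \<mu>" unfolding EE EE2 c_def g_def by simp
    finally show "g \<mu> = J (- \<mu>) - c * (E \<mu> * (S \<mu> * K \<mu>))" ..
  qed
  obtain J' where J': "((\<lambda>\<mu>. J \<mu>) has_vector_derivative J') (at \<nu>)"
    unfolding J_def using besselJ_param_deriv[OF z1] by blast
  obtain K' where K': "((\<lambda>\<mu>. K \<mu>) has_vector_derivative K') (at \<nu>)"
    unfolding K_def using besselK_param_deriv[OF w0] by blast
  have Jd: "besselJ_dorder \<nu> z1 = J'" unfolding besselJ_dorder_def using J' unfolding J_def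
    by (rule vector_derivative_at)
  have Kd: "besselK_dorder \<nu> w0 = K'" unfolding besselK_dorder_def using K' unfolding K_def
    by (rule vector_derivative_at)
  have neg: "((\<lambda>\<mu>::real. - \<mu>) has_vector_derivative -1) (at (- \<nu>))"
    by (auto intro!: derivative_eq_intros simp: has_real_derivative_iff_has_vector_derivative[symmetric])
  have dJm: "((\<lambda>\<mu>. J (- \<mu>)) has_vector_derivative - J') (at (- \<nu>))"
    using vector_diff_chain_at[OF neg, of "\<lambda>\<mu>. J \<mu>" J'] J' by (simp add: o_def)
  have Keven: "(\<lambda>\<mu>. K (- \<mu>)) = K" by (rule ext) (simp add: K_def besselK_even)
  have dK0: "((\<lambda>\<mu>. K (- \<mu>)) has_vector_derivative - K') (at (- \<nu>))"
    using vector_diff_chain_at[OF neg, of "\<lambda>\<mu>. K \<mu>" K'] K' by (simp add: o_def)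
  have dK: "(K has_vector_derivative - K') (at (- \<nu>))"
    using dK0 unfolding Keven .
  have dS: "(S has_vector_derivative of_real (cos (- \<nu> * pi) * pi)) (at (- \<nu>))"
    unfolding S_def[abs_def] by (intro has_vector_derivative_of_real) (auto intro!: derivative_eq_intros)
  have dE: "(E has_vector_derivative (\<i> * of_real pi / 2) * E (- \<nu>)) (at (- \<nu>))"
  proof -
    have "((\<lambda>z. exp (\<i> * (of_real pi * z / 2))) has_field_derivative exp (\<i> * (of_real pi * of_real (- \<nu>) / 2)) * (\<i> * (of_real pi / 2))) (at (of_real (- \<nu>)))"
      by (auto intro!: derivative_eq_intros)
    from has_vector_derivative_real_field[OF this]
    show ?thesis unfolding E_def[abs_def] by (simp add: mult_ac)
  qed
  have dg: "(g has_vector_derivative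
      - J' - c * (E (- \<nu>) * (S (- \<nu>) * - K' + of_real (cos (- \<nu> * pi) * pi) * K (- \<nu>)) + (\<i> * of_real pi / 2) * E (- \<nu>) * (S (- \<nu>) * K (- \<nu>)))) (at (- \<nu>))"
    unfolding g_eq
    by (intro has_vector_derivative_diff dJm has_vector_derivative_mult_right has_vector_derivative_mult dE dS dK)
  define T where "T = exp (- \<i> * of_real (pi * \<nu> / 2)) *
                   ((exp (- \<i> * of_real (pi * \<nu>)) + of_real (cos (pi * \<nu>))) * K \<nu>
                    + of_real (2 / pi * sin (pi * \<nu>)) * K') + J'"
  have val: "- J' - c * (E (- \<nu>) * (S (- \<nu>) * - K' + of_real (cos (- \<nu> * pi) * pi) * K (- \<nu>)) + (\<i> * of_real pi / 2) * E (- \<nu>) * (S (- \<nu>) * K (- \<nu>))) = - T"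
  proof -
    have e1: "E (- \<nu>) = exp (- \<i> * of_real (pi * \<nu> / 2))" unfolding E_def by simp
    have e2: "S (- \<nu>) = - of_real (sin (pi * \<nu>))" unfolding S_def by (simp add: mult.commute)
    have e3: "K (- \<nu>) = K \<nu>" unfolding K_def by (simp add: besselK_even)
    have e4: "exp (- \<i> * of_real (pi * \<nu>)) = of_real (cos (pi * \<nu>)) - \<i> * of_real (sin (pi * \<nu>))"
      by (rule exp_minus_i_real)
    have e5: "cos (- \<nu> * pi) = cos (pi * \<nu>)" by (simp add: mult.commute)
    show ?thesis unfolding T_def e1 e2 e3 e4 e5 c_def
      by (rule val_alg) simp
  qed
  have dg': "(g has_vector_derivative - T) (at (- \<nu>))" using dg unfolding val .
  have ber_eq: "(\<lambda>\<mu>. ber \<mu> x) = (\<lambda>\<mu>. Re (g \<mu>))"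
    unfolding ber_def g_def J_def z1_def ..
  have bei_eq: "(\<lambda>\<mu>. bei \<mu> x) = (\<lambda>\<mu>. Im (g \<mu>))"
    unfolding bei_def g_def J_def z1_def ..
  have r1: "((\<lambda>\<mu>. ber \<mu> x) has_real_derivative Re (- T)) (at (- \<nu>))"
    unfolding ber_eq has_real_derivative_iff_has_vector_derivative
    by (rule bounded_linear.has_vector_derivative[OF bounded_linear_Re dg'])
  have r2: "((\<lambda>\<mu>. bei \<mu> x) has_real_derivative Im (- T)) (at (- \<nu>))"
    unfolding bei_eq has_real_derivative_iff_has_vector_derivative
    by (rule bounded_linear.has_vector_derivative[OF bounded_linear_Im dg'])
  show ?thesis
    using r1 r2 unfolding T_def Jd[symmetric] Kd[symmetric] K_def w0_def z1_def by simp
qed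

end
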